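(* Let $\mathcal H$ and $\mathcal G$ be real Hilbert spaces, let $A\colon\mathcal H\to 2^{\mathcal H}$ and $B\colon\mathcal G\to 2^{\mathcal G}$ be maximally monotone, and let $L\colon\mathcal H\to\mathcal G$ be a bounded linear operator. Consider the primal problem: find $x\in\mathcal H$ with $0\in Ax+L^*BLx$, and the dual problem: find $v\in\mathcal G$ with $0\in -LA^{-1}(-L^*v)+B^{-1}v$. Set $R=(\mathrm{Id}+LL^* )^{-1}$, $Q=(\mathrm{Id}+L^*L)^{-1}$, and assume $\operatorname{zer}(A+L^*BL)\neq\varnothing$. Let $(\lambda_n)$ be a sequence in $\left]0,2\right[$, $(a_n)$ a sequence in $\mathcal H$, $(b_n)$ a sequence in $\mathcal G$, with $\sum_n\lambda_n(2-\lambda_n)=+\infty$ and $\sum_n\lambda_n\sqrt{\|a_n\|^2+\|b_n\|^2}<+\infty$. Let $x_0\in\mathcal H$, $v_0\in\mathcal G$, set $y_0=Lx_0$, $u_0=-L^*v_0$, and for every $n$: $p_n=J_A(x_n+u_n)+a_n$, $q_n=J_B(y_n+v_n)+b_n$, $r_n=x_n+u_n-p_n$, $s_n=y_n+v_n-q_n$, $t_n=R(Lr_n-s_n)$, $w_n=R(Lp_n-q_n)$, $x_{n+1}=x_n+\lambda_n(L^*t_n-r_n)$, $y_{n+1}=y_n-\lambda_n(t_n+s_n)$, $u_{n+1}=u_n-\lambda_nL^*w_n$, $v_{n+1}=v_n+\lambda_nw_n$. Then, writing $\widetilde t_n=Q(r_n+L^*s_n)$ and $\widetilde w_n=Q(p_n+L^*q_n)$: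 (i) $x_n-\widetilde w_n+Q(a_n+L^*b_n)\to0$ and $y_n-L\widetilde w_n+LQ(a_n+L^*b_n)\to0$; (ii) $u_n-r_n+\widetilde t_n-a_n+Q(a_n+L^*b_n)\to0$ and $v_n-s_n+L\widetilde t_n-b_n+LQ(a_n+L^*b_n)\to0$. Moreover, there exist a solution $\overline x$ of the primal problem and a solution $\overline v$ of the dual problem such that (iii) $-L^*\overline v\in A\overline x$ and $\overline v\in BL\overline x$; (iv) $x_n\rightharpoonup\overline x$ and $v_n\rightharpoonup\overline v$.
   Context: $J_A=(\mathrm{Id}+A)^{-1}$ is the resolvent; $A^{-1}$ is the set-valued inverse; $\operatorname{zer}$ is the zero set; $\to$ is strong and $\rightharpoonup$ weak convergence. *)

theory Defs
  imports "HOL-Analysis.Analysis"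
begin

definition monotone_op :: "('a::real_inner \<Rightarrow> 'a set) \<Rightarrow> bool" where
  "monotone_op A \<longleftrightarrow> (\<forall>x y u v. u \<in> A x \<longrightarrow> v \<in> A y \<longrightarrow> inner (x - y) (u - v) \<ge> 0)"

definition maximal_monotone :: "('a::real_inner \<Rightarrow> 'a set) \<Rightarrow> bool" where
  "maximal_monotone A \<longleftrightarrow> monotone_op A \<and>
     (\<forall>x u. (\<forall>y v. v \<in> A y \<longrightarrow> inner (x - y) (u - v) \<ge> 0) \<longrightarrow> u \<in> A x)"

text \<open>Resolvent J_A = (Id + A)^{-1}, single-valued for maximally monotone A.\<close>
definition resolvent :: "('a::real_inner \<Rightarrow> 'a set) \<Rightarrow> 'a \<Rightarrow> 'a" where
  "resolvent A x = (THE p. x - p \<in> A p)"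

definition inv_id_plus :: "('a::real_vector \<Rightarrow> 'a) \<Rightarrow> 'a \<Rightarrow> 'a" where
  "inv_id_plus T y = (THE z. z + T z = y)"

definition set_inv :: "('a \<Rightarrow> 'b set) \<Rightarrow> 'b \<Rightarrow> 'a set" where
  "set_inv A u = {x. u \<in> A x}"

definition op_add :: "('a \<Rightarrow> 'b::plus set) \<Rightarrow> ('a \<Rightarrow> 'b set) \<Rightarrow> 'a \<Rightarrow> 'b set" where
  "op_add A C x = {a + c | a c. a \<in> A x \<and> c \<in> C x}"

definition zer :: "('a \<Rightarrow> 'b::zero set) \<Rightarrow> 'a set" where
  "zer T = {x. 0 \<in> T x}"

definition weak_conv :: "(nat \<Rightarrow> 'a::real_inner) \<Rightarrow> 'a \<Rightarrow> bool" (infix "\<rightharpoonup>" 50) where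
  "xs \<rightharpoonup> x \<longleftrightarrow> (\<forall>z. (\<lambda>n. inner (xs n) z) \<longlonglongrightarrow> inner x z)"

end

theory Submission
  imports Defs "HOL-Library.Diagonal_Subsequence"
begin

lemma par_id:
  fixes a b :: "'a::real_inner"
  shows "(norm ((1/2) *\<^sub>R (a + b)))\<^sup>2 = ((norm a)\<^sup>2 + (norm b)\<^sup>2)/2 - (norm (a - b))\<^sup>2/4"
  by (simp add: power2_norm_eq_inner inner_add_left inner_add_right inner_diff_left
      inner_diff_right inner_commute algebra_simps) (simp add: field_simps)

lemma strong_min:
  fixes h :: "'a::{real_inner,complete_space} \<Rightarrow> real" and D :: "'a set"
  assumes ne: "D \<noteq> {}" and lb: "\<And>z. z \<in> D \<Longrightarrow> mlow \<le> h z"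
    and mid: "\<And>z1 z2. z1 \<in> D \<Longrightarrow> z2 \<in> D \<Longrightarrow> (1/2) *\<^sub>R (z1 + z2) \<in> D \<and>
        h ((1/2) *\<^sub>R (z1 + z2)) \<le> (h z1 + h z2)/2 - (norm (z1 - z2))\<^sup>2/8"
    and lim: "\<And>X l. (\<And>n. X n \<in> D) \<Longrightarrow> X \<longlonglongrightarrow> l \<Longrightarrow> (\<lambda>n. h (X n)) \<longlonglongrightarrow> Inf (h ` D)
        \<Longrightarrow> l \<in> D \<and> h l \<le> Inf (h ` D)"
  shows "\<exists>z\<in>D. \<forall>y\<in>D. h z \<le> h y"
proof -
  define m where "m = Inf (h ` D)"
  have bdd: "bdd_below (h ` D)" using lb by (rule bdd_belowI2)
  have m_le: "\<And>z. z\<in>D \<Longrightarrow> m \<le> h z" using cInf_lower[OF _ bdd] m_def by auto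
  have "\<forall>n. \<exists>z. z \<in> D \<and> h z < m + inverse (real (Suc n))"
  proof
    fix n
    have "Inf (h ` D) < m + inverse (real (Suc n))" using m_def by simp
    then obtain w where "w \<in> h ` D" "w < m + inverse (real (Suc n))"
      using cInf_lessD[of "h ` D"] ne by blast
    then show "\<exists>z. z \<in> D \<and> h z < m + inverse (real (Suc n))" by auto
  qed
  then obtain X where X: "\<And>n. X n \<in> D" "\<And>n. h (X n) < m + inverse (real (Suc n))"
    by metis
  have hX: "(\<lambda>n. h (X n)) \<longlonglongrightarrow> m"
  proof (rule tendsto_sandwich[of "\<lambda>n. m" _ _ "\<lambda>n. m + inverse (real (Suc n))"])
    show "\<forall>\<^sub>F n in sequentially. m \<le> h (X n)" using m_le X by auto
    show "\<forall>\<^sub>F n in sequentially. h (X n) \<le> m + inverse (real (Suc n))"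
      using X(2) less_imp_le by (intro always_eventually) blast
    show "(\<lambda>n. m) \<longlonglongrightarrow> m" by simp
    show "(\<lambda>n. m + inverse (real (Suc n))) \<longlonglongrightarrow> m"
      using tendsto_add[OF tendsto_const LIMSEQ_inverse_real_of_nat, of m] by simp
  qed
  have key: "(norm (X n - X k))\<^sup>2 \<le> 4 * (inverse (real (Suc n)) + inverse (real (Suc k)))" for n k
  proof -
    have "m \<le> h ((1/2) *\<^sub>R (X n + X k))" using mid[OF X(1) X(1)] m_le by blast
    also have "\<dots> \<le> (h (X n) + h (X k))/2 - (norm (X n - X k))\<^sup>2/8" using mid[OF X(1) X(1)] by blast
    finally show ?thesis using X(2)[of n] X(2)[of k] by argo
  qed
  have "Cauchy X"
  proof (rule CauchyI)
    fix e :: real assume e: "0 < e"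
    obtain N :: nat where N: "8 / e\<^sup>2 < real N" using reals_Archimedean2 by blast
    have Npos: "0 < real N" using N e by (smt (verit) divide_pos_pos zero_less_power)
    show "\<exists>M. \<forall>m\<ge>M. \<forall>n\<ge>M. norm (X m - X n) < e"
    proof (intro exI allI impI)
      fix a b assume ab: "N \<le> a" "N \<le> b"
      have ia: "inverse (real (Suc a)) < inverse (real N)"
        using ab Npos by (intro less_imp_inverse_less) auto
      have ib: "inverse (real (Suc b)) < inverse (real N)"
        using ab Npos by (intro less_imp_inverse_less) auto
      have "8 * inverse (real N) < e\<^sup>2"
        using N Npos e by (simp add: field_simps)
      then have "(norm (X a - X b))\<^sup>2 < e\<^sup>2" using key[of a b] ia ib by argo
      then show "norm (X a - X b) < e" using e by (meson abs_le_square_iff abs_norm_cancel less_le_not_le order.strict_iff_not power2_less_imp_less)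
    qed
  qed
  then obtain l where l: "X \<longlonglongrightarrow> l" using Cauchy_convergent convergent_def by blast
  from lim[OF X(1) l] hX m_def have "l \<in> D" "h l \<le> m" by auto
  then show ?thesis using m_le by (meson order_trans)
qed

lemma quad0:
  fixes a b :: real
  assumes "b \<ge> 0" "\<And>t. 0 \<le> t * a + t\<^sup>2 * b"
  shows "a = 0"
proof (rule ccontr)
  assume a: "a \<noteq> 0"
  define t where "t = - a / (2 * b + 1)"
  have "0 \<le> t * a + t\<^sup>2 * b" using assms by blast
  moreover have "t * a + t\<^sup>2 * b = - a\<^sup>2 * (b + 1) / (2*b+1)\<^sup>2"
    using assms(1) unfolding t_def by (simp add: divide_simps power2_eq_square) (simp add: algebra_simps)
  moreover have "- a\<^sup>2 * (b + 1) / (2*b+1)\<^sup>2 < 0"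
    using a assms(1) by (simp add: divide_neg_pos mult_neg_pos)
  ultimately show False by linarith
qed

lemma riesz_sub:
  fixes M :: "'a::{real_inner,complete_space} set" and \<phi> :: "'a \<Rightarrow> real"
  assumes cl: "closed M" and z0: "0 \<in> M" and addM: "\<And>x y. x\<in>M \<Longrightarrow> y\<in>M \<Longrightarrow> x+y\<in>M"
    and scM: "\<And>c x. x\<in>M \<Longrightarrow> c *\<^sub>R x \<in> M"
    and padd: "\<And>x y. x\<in>M \<Longrightarrow> y\<in>M \<Longrightarrow> \<phi> (x+y) = \<phi> x + \<phi> y"
    and psc: "\<And>c x. x\<in>M \<Longrightarrow> \<phi> (c *\<^sub>R x) = c * \<phi> x"
    and pb: "\<And>x. x\<in>M \<Longrightarrow> \<bar>\<phi> x\<bar> \<le> C * norm x"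
  shows "\<exists>z\<in>M. \<forall>m\<in>M. inner z m = \<phi> m"
proof -
  define h where "h z = (norm z)\<^sup>2/2 - \<phi> z" for z
  have pdiff: "\<phi> (x - y) = \<phi> x - \<phi> y" if "x\<in>M" "y\<in>M" for x y
  proof -
    have "\<phi> (x + (-1) *\<^sub>R y) = \<phi> x + (-1) * \<phi> y" using padd psc scM that by metis
    then show ?thesis by simp
  qed
  have diffM: "x - y \<in> M" if "x\<in>M" "y\<in>M" for x y
    using addM[OF that(1) scM[OF that(2), of "-1"]] by simp
  have pb': "\<bar>\<phi> x\<bar> \<le> \<bar>C\<bar> * norm x" if "x\<in>M" for x
    using pb[OF that] by (smt (verit) mult_right_mono norm_ge_zero)
  have "\<exists>z\<in>M. \<forall>y\<in>M. h z \<le> h y"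
  proof (rule strong_min[where mlow = "- C\<^sup>2/2"])
    show "M \<noteq> {}" using z0 by blast
    show "- C\<^sup>2/2 \<le> h z" if "z \<in> M" for z
    proof -
      have "0 \<le> (norm z - \<bar>C\<bar>)\<^sup>2" by simp
      then show ?thesis using pb'[OF that] unfolding h_def
        by (simp add: power2_eq_square algebra_simps)
    qed
    show "(1/2) *\<^sub>R (z1 + z2) \<in> M \<and> h ((1/2) *\<^sub>R (z1 + z2)) \<le> (h z1 + h z2)/2 - (norm (z1 - z2))\<^sup>2/8"
      if "z1 \<in> M" "z2 \<in> M" for z1 z2
    proof
      show "(1/2) *\<^sub>R (z1 + z2) \<in> M" using that addM scM by blast
      have "\<phi> ((1/2) *\<^sub>R (z1 + z2)) = (\<phi> z1 + \<phi> z2)/2" using that addM padd psc by simp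
      then show "h ((1/2) *\<^sub>R (z1 + z2)) \<le> (h z1 + h z2)/2 - (norm (z1 - z2))\<^sup>2/8"
        unfolding h_def par_id by argo
    qed
    show "l \<in> M \<and> h l \<le> Inf (h ` M)"
      if X: "\<And>n. X n \<in> M" "X \<longlonglongrightarrow> l" "(\<lambda>n. h (X n)) \<longlonglongrightarrow> Inf (h ` M)" for X l
    proof -
      have lM: "l \<in> M" using closed_sequentially[OF cl X(1) X(2)] .
      have "(\<lambda>n. \<phi> (X n) - \<phi> l) \<longlonglongrightarrow> 0"
      proof (rule tendsto_sandwich[where f="\<lambda>n. - (\<bar>C\<bar> * norm (X n - l))" and h="\<lambda>n. \<bar>C\<bar> * norm (X n - l)"])
        have t: "(\<lambda>n. \<bar>C\<bar> * norm (X n - l)) \<longlonglongrightarrow> 0"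
          using tendsto_mult_right_zero[OF tendsto_norm_zero[OF LIM_zero[OF X(2)]]] by simp
        show "(\<lambda>n. \<bar>C\<bar> * norm (X n - l)) \<longlonglongrightarrow> 0" by (rule t)
        show "(\<lambda>n. - (\<bar>C\<bar> * norm (X n - l))) \<longlonglongrightarrow> 0" using tendsto_minus[OF t] by simp
        show "\<forall>\<^sub>F n in sequentially. - (\<bar>C\<bar> * norm (X n - l)) \<le> \<phi> (X n) - \<phi> l"
        proof (intro always_eventually allI)
          fix n show "- (\<bar>C\<bar> * norm (X n - l)) \<le> \<phi> (X n) - \<phi> l"
            using pb'[OF diffM[OF X(1)[of n] lM]] pdiff[OF X(1)[of n] lM] by (simp add: abs_le_iff)
        qed
        show "\<forall>\<^sub>F n in sequentially. \<phi> (X n) - \<phi> l \<le> \<bar>C\<bar> * norm (X n - l)"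
        proof (intro always_eventually allI)
          fix n show "\<phi> (X n) - \<phi> l \<le> \<bar>C\<bar> * norm (X n - l)"
            using pb'[OF diffM[OF X(1)[of n] lM]] pdiff[OF X(1)[of n] lM] by (simp add: abs_le_iff)
        qed
      qed
      then have "(\<lambda>n. \<phi> (X n)) \<longlonglongrightarrow> \<phi> l"
        using Lim_transform2 tendsto_const by (metis LIM_zero_cancel)
      then have "(\<lambda>n. h (X n)) \<longlonglongrightarrow> h l"
        unfolding h_def by (intro tendsto_intros X(2)) auto
      then have "h l = Inf (h ` M)" using X(3) LIMSEQ_unique by blast
      then show ?thesis using lM by simp
    qed
  qed
  then obtain z where zM: "z \<in> M" and zmin: "\<And>y. y\<in>M \<Longrightarrow> h z \<le> h y" by blast
  have "inner z m = \<phi> m" if mM: "m \<in> M" for m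
  proof -
    have "0 \<le> t * (inner z m - \<phi> m) + t\<^sup>2 * ((norm m)\<^sup>2/2)" for t
    proof -
      have "z + t *\<^sub>R m \<in> M" using zM mM addM scM by blast
      then have "h z \<le> h (z + t *\<^sub>R m)" by (rule zmin)
      moreover have "\<phi> (z + t *\<^sub>R m) = \<phi> z + t * \<phi> m" using zM mM scM padd psc by simp
      moreover have "(norm (z + t *\<^sub>R m))\<^sup>2 = (norm z)\<^sup>2 + 2 * t * inner z m + t\<^sup>2 * (norm m)\<^sup>2"
        unfolding power2_norm_eq_inner by (simp add: inner_add_left inner_add_right inner_commute
            power2_eq_square algebra_simps)
      ultimately show ?thesis unfolding h_def by (simp add: algebra_simps)
    qed
    then show ?thesis using quad0[of "(norm m)\<^sup>2/2" "inner z m - \<phi> m"] by simp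
  qed
  then show ?thesis using zM by blast
qed


lemma closure_subspace_add:
  fixes S :: "'a::real_normed_vector set"
  assumes "subspace S" "x \<in> closure S" "y \<in> closure S"
  shows "x + y \<in> closure S"
proof -
  obtain X where X: "\<And>n. X n \<in> S" "X \<longlonglongrightarrow> x" using assms(2) closure_sequential by metis
  obtain Y where Y: "\<And>n. Y n \<in> S" "Y \<longlonglongrightarrow> y" using assms(3) closure_sequential by metis
  have "\<And>n. X n + Y n \<in> S" using X Y assms(1) subspace_add by blast
  moreover have "(\<lambda>n. X n + Y n) \<longlonglongrightarrow> x + y" using X Y by (intro tendsto_intros)
  ultimately show ?thesis using closure_sequential by metis
qed

lemma closure_subspace_scale:
  fixes S :: "'a::real_normed_vector set"
  assumes "subspace S" "x \<in> closure S"
  shows "c *\<^sub>R x \<in> closure S"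
proof -
  obtain X where X: "\<And>n. X n \<in> S" "X \<longlonglongrightarrow> x" using assms(2) closure_sequential by metis
  have "\<And>n. c *\<^sub>R X n \<in> S" using X assms(1) subspace_scale by blast
  moreover have "(\<lambda>n. c *\<^sub>R X n) \<longlonglongrightarrow> c *\<^sub>R x" using X by (intro tendsto_intros)
  ultimately show ?thesis using closure_sequential by metis
qed

lemma weak_subseq:
  fixes y :: "nat \<Rightarrow> 'a::{real_inner,complete_space}"
  assumes yb: "\<And>n. norm (y n) \<le> B"
  shows "\<exists>r z. strict_mono r \<and> (y \<circ> r) \<rightharpoonup> z"
proof -
  have B0: "0 \<le> B" using yb[of 0] norm_ge_zero order_trans by blast
  interpret S: subseqs "\<lambda>k s. convergent (\<lambda>j. inner (y (s j)) (y k))"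
  proof
    fix k and s :: "nat \<Rightarrow> nat" assume "strict_mono s"
    have "bounded (range (\<lambda>j. inner (y (s j)) (y k)))"
      unfolding bounded_iff
    proof (intro exI ballI)
      fix w assume "w \<in> range (\<lambda>j. inner (y (s j)) (y k))"
      then obtain j where "w = inner (y (s j)) (y k)" by blast
      then have "norm w \<le> norm (y (s j)) * norm (y k)" using Cauchy_Schwarz_ineq2 by simp
      also have "\<dots> \<le> B * B" using yb B0 by (intro mult_mono) auto
      finally show "norm w \<le> B * B" .
    qed
    then obtain l r where "strict_mono r" "((\<lambda>j. inner (y (s j)) (y k)) \<circ> r) \<longlonglongrightarrow> l"
      using bounded_imp_convergent_subsequence by blast
    then show "\<exists>r'. strict_mono r' \<and> convergent (\<lambda>j. inner (y ((s \<circ> r') j)) (y k))"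
      by (auto simp: convergent_def o_def)
  qed
  define d where "d = S.diagseq"
  have dmono: "strict_mono d" unfolding d_def by (rule S.subseq_diagseq)
  define Y where "Y = y \<circ> d"
  have conv: "convergent (\<lambda>j. inner (Y j) (y k))" for k
  proof -
    have "convergent (\<lambda>j. inner (y ((S.diagseq \<circ> (+) (Suc k)) j)) (y k))"
    proof (rule S.diagseq_holds)
      fix r s n assume "strict_mono (r::nat\<Rightarrow>nat)" "convergent (\<lambda>j. inner (y (s j)) (y n))"
      from convergent_subseq_convergent[OF this(2) this(1)]
      show "convergent (\<lambda>j. inner (y ((s \<circ> r) j)) (y n))" by (simp add: o_def)
    qed
    then have "convergent (\<lambda>j. inner (Y (j + Suc k)) (y k))"
      by (simp add: Y_def d_def o_def add.commute)
    then show ?thesis using convergent_ignore_initial_segment by blast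
  qed
  define Sp where "Sp = span (range y)"
  define M where "M = closure Sp"
  have subSp: "subspace Sp" unfolding Sp_def by (rule subspace_span)
  have YM: "Y j \<in> M" for j
    unfolding M_def Sp_def Y_def using closure_subset span_superset by fastforce
  have Yb: "norm (Y j) \<le> B" for j unfolding Y_def o_def by (rule yb)
  have convSp: "convergent (\<lambda>j. inner (Y j) m)" if "m \<in> Sp" for m
  proof -
    have "subspace {m. convergent (\<lambda>j. inner (Y j) m)}"
      unfolding subspace_def
    proof (intro conjI ballI allI)
      show "0 \<in> {m. convergent (\<lambda>j. inner (Y j) m)}" by (simp add: convergent_const)
      fix a b assume "a \<in> {m. convergent (\<lambda>j. inner (Y j) m)}" "b \<in> {m. convergent (\<lambda>j. inner (Y j) m)}"
      then show "a + b \<in> {m. convergent (\<lambda>j. inner (Y j) m)}"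
        by (simp add: inner_add_right convergent_add)
    next
      fix c a assume "a \<in> {m. convergent (\<lambda>j. inner (Y j) m)}"
      then obtain l where "(\<lambda>j. inner (Y j) a) \<longlonglongrightarrow> l" by (auto simp: convergent_def)
      then have "(\<lambda>j. c * inner (Y j) a) \<longlonglongrightarrow> c * l" by (intro tendsto_intros)
      then show "c *\<^sub>R a \<in> {m. convergent (\<lambda>j. inner (Y j) m)}" by (auto simp: convergent_def)
    qed
    then show ?thesis using that unfolding Sp_def
      using span_induct[of m "range y" "\<lambda>m. convergent (\<lambda>j. inner (Y j) m)"] conv by auto
  qed
  have convM: "convergent (\<lambda>j. inner (Y j) m)" if mM: "m \<in> M" for m
  proof -
    have "Cauchy (\<lambda>j. inner (Y j) m)"
    proof (rule CauchyI)
      fix e :: real assume e: "0 < e"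
      define \<delta> where "\<delta> = e / (4 * B + 4)"
      have dpos: "0 < \<delta>" unfolding \<delta>_def using e B0 by simp
      obtain m' where m': "m' \<in> Sp" "dist m m' < \<delta>"
        using closure_approachableD[OF mM[unfolded M_def] dpos] by blast
      have "Cauchy (\<lambda>j. inner (Y j) m')" using convSp[OF m'(1)] convergent_Cauchy by blast
      then obtain N where N: "\<forall>a\<ge>N. \<forall>b\<ge>N. norm (inner (Y a) m' - inner (Y b) m') < e/2"
        using e unfolding Cauchy_iff by (meson half_gt_zero)
      show "\<exists>N. \<forall>a\<ge>N. \<forall>b\<ge>N. norm (inner (Y a) m - inner (Y b) m) < e"
      proof (intro exI allI impI)
        fix a b assume ab: "N \<le> a" "N \<le> b"
        have "inner (Y a) m - inner (Y b) m = (inner (Y a) m' - inner (Y b) m') + inner (Y a - Y b) (m - m')"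
          by (simp add: inner_diff_left inner_diff_right)
        moreover have "\<bar>inner (Y a - Y b) (m - m')\<bar> \<le> (2 * B) * \<delta>"
        proof -
          have "\<bar>inner (Y a - Y b) (m - m')\<bar> \<le> norm (Y a - Y b) * norm (m - m')"
            by (rule Cauchy_Schwarz_ineq2)
          also have "\<dots> \<le> (2 * B) * \<delta>"
          proof (rule mult_mono)
            show "norm (Y a - Y b) \<le> 2 * B" using norm_triangle_ineq4[of "Y a" "Y b"] Yb[of a] Yb[of b] by linarith
            show "norm (m - m') \<le> \<delta>" using m'(2) by (simp add: dist_norm)
          qed (use B0 in auto)
          finally show ?thesis .
        qed
        moreover have "(2 * B) * \<delta> < e / 2"
        proof -
          have "(2 * B) * \<delta> = e * (2 * B) / (4 * B + 4)" unfolding \<delta>_def by simp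
          also have "\<dots> < e / 2" using e B0 by (simp add: field_simps)
          finally show ?thesis .
        qed
        moreover have "\<bar>inner (Y a) m' - inner (Y b) m'\<bar> < e/2" using N ab by auto
        ultimately show "norm (inner (Y a) m - inner (Y b) m) < e"
          unfolding real_norm_def by linarith
      qed
    qed
    then show ?thesis using Cauchy_convergent_iff by blast
  qed
  define \<phi> where "\<phi> m = lim (\<lambda>j. inner (Y j) m)" for m
  have phiL: "(\<lambda>j. inner (Y j) m) \<longlonglongrightarrow> \<phi> m" if "m \<in> M" for m
    using convM[OF that] unfolding \<phi>_def convergent_LIMSEQ_iff .
  have clM: "closed M" unfolding M_def by simp
  have M0: "0 \<in> M" unfolding M_def using subSp subspace_0 closure_subset by blast
  have addM: "a + b \<in> M" if "a \<in> M" "b \<in> M" for a b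
    using closure_subspace_add[OF subSp] that unfolding M_def by blast
  have scM: "c *\<^sub>R a \<in> M" if "a \<in> M" for a c
    using closure_subspace_scale[OF subSp] that unfolding M_def by blast
  have "\<exists>z\<in>M. \<forall>m\<in>M. inner z m = \<phi> m"
  proof (rule riesz_sub[OF clM M0 addM scM])
    fix a b assume ab: "a \<in> M" "b \<in> M"
    have "(\<lambda>j. inner (Y j) (a + b)) \<longlonglongrightarrow> \<phi> a + \<phi> b"
      unfolding inner_add_right by (intro tendsto_intros phiL ab)
    then show "\<phi> (a + b) = \<phi> a + \<phi> b" using phiL[OF addM[OF ab]] LIMSEQ_unique by blast
  next
    fix c a assume a: "a \<in> M"
    have "(\<lambda>j. inner (Y j) (c *\<^sub>R a)) \<longlonglongrightarrow> c * \<phi> a"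
      unfolding inner_scaleR_right by (intro tendsto_intros phiL a)
    then show "\<phi> (c *\<^sub>R a) = c * \<phi> a" using phiL[OF scM[OF a]] LIMSEQ_unique by blast
  next
    fix a assume a: "a \<in> M"
    have "(\<lambda>j. \<bar>inner (Y j) a\<bar>) \<longlonglongrightarrow> \<bar>\<phi> a\<bar>" by (intro tendsto_intros phiL a)
    moreover have "\<bar>inner (Y j) a\<bar> \<le> B * norm a" for j
      using Cauchy_Schwarz_ineq2[of "Y j" a] Yb[of j] by (meson mult_right_mono norm_ge_zero order_trans)
    ultimately show "\<bar>\<phi> a\<bar> \<le> B * norm a" by (meson LIMSEQ_le_const2)
  qed
  then obtain z where zM: "z \<in> M" and zr: "\<And>m. m \<in> M \<Longrightarrow> inner z m = \<phi> m" by blast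
  have "(\<lambda>j. inner (Y j) c) \<longlonglongrightarrow> inner z c" for c
  proof -
    have "\<exists>p\<in>M. \<forall>m\<in>M. inner p m = inner c m"
    proof (rule riesz_sub[OF clM M0 addM scM, where C = "norm c"])
      show "\<And>x y. inner c (x + y) = inner c x + inner c y" by (simp add: inner_add_right)
      show "\<And>a x. inner c (a *\<^sub>R x) = a * inner c x" by simp
      show "\<And>x. \<bar>inner c x\<bar> \<le> norm c * norm x" by (rule Cauchy_Schwarz_ineq2)
    qed
    then obtain p where pM: "p \<in> M" and pr: "\<And>m. m \<in> M \<Longrightarrow> inner p m = inner c m" by blast
    have "inner (Y j) c = inner (Y j) p" for j
      using pr[OF YM[of j]] by (simp add: inner_commute)
    moreover have "inner z c = \<phi> p" using pr[OF zM] zr[OF pM] by (simp add: inner_commute)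
    ultimately show ?thesis using phiL[OF pM] by simp
  qed
  then have "Y \<rightharpoonup> z" unfolding weak_conv_def by blast
  then show ?thesis using dmono Y_def by blast
qed


lemma le_eps:
  fixes a b c :: real
  assumes "\<And>t. 0 < t \<Longrightarrow> t \<le> 1 \<Longrightarrow> a \<le> b + t * c"
  shows "a \<le> b"
proof (rule field_le_epsilon)
  fix e :: real assume e: "0 < e"
  define t where "t = min 1 (e / (\<bar>c\<bar> + 1))"
  have t: "0 < t" "t \<le> 1" unfolding t_def using e by auto
  have "t * c \<le> t * \<bar>c\<bar>" using t by (simp add: mult_left_mono)
  also have "\<dots> \<le> e / (\<bar>c\<bar> + 1) * \<bar>c\<bar>" unfolding t_def by (intro mult_right_mono) auto
  also have "\<dots> \<le> e" using e by (simp add: field_simps)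
  finally show "a \<le> b + e" using assms[OF t] by linarith
qed

lemma inner_self_le0: "inner x x \<le> 0 \<Longrightarrow> (x::'a::real_inner) = 0"
  by (metis antisym inner_ge_zero inner_eq_zero_iff)

lemma maxmono_related:
  assumes "maximal_monotone A" "\<And>y v. v \<in> A y \<Longrightarrow> 0 \<le> inner (x - y) (u - v)"
  shows "u \<in> A x"
  using assms unfolding maximal_monotone_def by blast

lemma maxmono_mono:
  assumes "maximal_monotone A" "u \<in> A x" "v \<in> A y"
  shows "0 \<le> inner (x - y) (u - v)"
  using assms unfolding maximal_monotone_def monotone_op_def by blast

lemma minty0:
  fixes A :: "'a::{real_inner,complete_space} \<Rightarrow> 'a set"
  assumes mm: "maximal_monotone A"
  shows "\<exists>p. - p \<in> A p"
proof -
  define G where "G = {(y,v). v \<in> A y}"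
  define aff where "aff w z = inner (fst z) (snd w) + inner (fst w) (snd z) - inner (fst w) (snd w)"
    for w z :: "'a \<times> 'a"
  define D where "D = {z. \<exists>c. \<forall>w\<in>G. aff w z \<le> c}"
  define F where "F z = Sup ((\<lambda>w. aff w z) ` G)" for z
  define h where "h z = F z + (norm z)\<^sup>2 / 2" for z
  have Gne: "G \<noteq> {}"
  proof
    assume "G = {}"
    then have "0 \<in> A 0" using maxmono_related[OF mm, of 0 0] unfolding G_def by auto
    then show False using \<open>G = {}\<close> unfolding G_def by auto
  qed
  have Fup: "aff w z \<le> F z" if "z \<in> D" "w \<in> G" for z w
  proof -
    from that(1) obtain c where "\<forall>w\<in>G. aff w z \<le> c" unfolding D_def by blast
    then have "bdd_above ((\<lambda>w. aff w z) ` G)" by (auto intro: bdd_aboveI2)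
    then show ?thesis unfolding F_def using that(2) by (intro cSup_upper) auto
  qed
  have Fle: "F z \<le> c" if "\<And>w. w \<in> G \<Longrightarrow> aff w z \<le> c" for z c
    unfolding F_def using Gne that by (intro cSup_least) auto
  have Fge: "inner (fst z) (snd z) \<le> F z" if zD: "z \<in> D" for z
  proof (rule ccontr)
    assume "\<not> inner (fst z) (snd z) \<le> F z"
    then have lt: "F z < inner (fst z) (snd z)" by simp
    have "snd z \<in> A (fst z)"
    proof (rule maxmono_related[OF mm])
      fix y v assume "v \<in> A y"
      then have "(y,v) \<in> G" unfolding G_def by simp
      then have "aff (y,v) z < inner (fst z) (snd z)" using Fup[OF zD] lt by fastforce
      then show "0 \<le> inner (fst z - y) (snd z - v)"
        unfolding aff_def by (simp add: inner_diff_left inner_diff_right inner_commute)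
    qed
    then have "z \<in> G" unfolding G_def by (cases z) auto
    then have "aff z z \<le> F z" using Fup[OF zD] by blast
    then show False using lt unfolding aff_def by simp
  qed
  have aff_comb: "aff w (a *\<^sub>R z1 + b *\<^sub>R z2) = a * aff w z1 + b * aff w z2" if "a + b = 1" for w z1 z2 a b
  proof -
    have "aff w (a *\<^sub>R z1 + b *\<^sub>R z2) = a * (inner (fst z1) (snd w) + inner (fst w) (snd z1))
       + b * (inner (fst z2) (snd w) + inner (fst w) (snd z2)) - (a + b) * inner (fst w) (snd w)"
      unfolding aff_def using that by (simp add: inner_add_left inner_add_right algebra_simps)
    then show ?thesis unfolding aff_def by (simp add: algebra_simps)
  qed
  have aff_self: "aff w' w \<le> inner (fst w) (snd w)" if "w \<in> G" "w' \<in> G" for w w'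
  proof -
    have "0 \<le> inner (fst w - fst w') (snd w - snd w')"
      using that maxmono_mono[OF mm] unfolding G_def by (cases w, cases w') auto
    then show ?thesis unfolding aff_def by (simp add: inner_diff_left inner_diff_right inner_commute)
  qed
  have GD: "w \<in> D" if "w \<in> G" for w unfolding D_def using aff_self that by blast
  have FG: "F w \<le> inner (fst w) (snd w)" if "w \<in> G" for w using Fle aff_self that by blast
  have nsq: "(norm z)\<^sup>2 = inner (fst z) (fst z) + inner (snd z) (snd z)" for z :: "'a \<times> 'a"
    by (simp add: power2_norm_eq_inner inner_prod_def)
  have "\<exists>z\<in>D. \<forall>y\<in>D. h z \<le> h y"
  proof (rule strong_min[where mlow = 0])
    show "D \<noteq> {}" using Gne GD by blast
    show "0 \<le> h z" if "z \<in> D" for z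
    proof -
      have "0 \<le> inner (fst z + snd z) (fst z + snd z)" by simp
      then have "0 \<le> inner (fst z) (snd z) + (norm z)\<^sup>2/2"
        unfolding nsq by (simp add: inner_add_left inner_add_right inner_commute) argo
      then show ?thesis unfolding h_def using Fge[OF that] by linarith
    qed
    show "(1/2) *\<^sub>R (z1 + z2) \<in> D \<and> h ((1/2) *\<^sub>R (z1 + z2)) \<le> (h z1 + h z2)/2 - (norm (z1 - z2))\<^sup>2/8"
      if "z1 \<in> D" "z2 \<in> D" for z1 z2
    proof -
      have e: "aff w ((1/2) *\<^sub>R (z1 + z2)) = (1/2) * aff w z1 + (1/2) * aff w z2" for w
        using aff_comb[of "1/2" "1/2" w z1 z2] by (simp add: scaleR_add_right)
      have b: "aff w ((1/2) *\<^sub>R (z1 + z2)) \<le> (F z1 + F z2)/2" if "w \<in> G" for w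
        unfolding e using Fup[OF \<open>z1 \<in> D\<close> that] Fup[OF \<open>z2 \<in> D\<close> that] by argo
      then have "(1/2) *\<^sub>R (z1 + z2) \<in> D" unfolding D_def by blast
      moreover have "F ((1/2) *\<^sub>R (z1 + z2)) \<le> (F z1 + F z2)/2" using Fle b by blast
      then have "h ((1/2) *\<^sub>R (z1 + z2)) \<le> (h z1 + h z2)/2 - (norm (z1 - z2))\<^sup>2/8"
        unfolding h_def par_id by argo
      ultimately show ?thesis by blast
    qed
    show "l \<in> D \<and> h l \<le> Inf (h ` D)"
      if X: "\<And>n. X n \<in> D" "X \<longlonglongrightarrow> l" "(\<lambda>n. h (X n)) \<longlonglongrightarrow> Inf (h ` D)" for X l
    proof -
      have b: "aff w l + (norm l)\<^sup>2/2 \<le> Inf (h ` D)" if w: "w \<in> G" for w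
      proof (rule LIMSEQ_le[OF _ X(3)])
        show "(\<lambda>n. aff w (X n) + (norm (X n))\<^sup>2/2) \<longlonglongrightarrow> aff w l + (norm l)\<^sup>2/2"
          unfolding aff_def by (intro tendsto_intros X(2)) simp_all
        show "\<exists>N. \<forall>n\<ge>N. aff w (X n) + (norm (X n))\<^sup>2/2 \<le> h (X n)"
          unfolding h_def using Fup[OF X(1) w] by auto
      qed
      have b': "aff w l \<le> Inf (h ` D) - (norm l)\<^sup>2/2" if "w \<in> G" for w
        using b[OF that] by argo
      then have "l \<in> D" unfolding D_def by blast
      moreover have "F l \<le> Inf (h ` D) - (norm l)\<^sup>2/2" using Fle b' by blast
      ultimately show ?thesis unfolding h_def by simp
    qed
  qed
  then obtain z where zD: "z \<in> D" and zmin: "\<And>y. y \<in> D \<Longrightarrow> h z \<le> h y" by blast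
  have var: "F z \<le> inner (fst w) (snd w) + inner z (w - z)" if wG: "w \<in> G" for w
  proof (rule le_eps[where c = "(norm (w - z))\<^sup>2/2"])
    fix t :: real assume t: "0 < t" "t \<le> 1"
    define zt where "zt = (1 - t) *\<^sub>R z + t *\<^sub>R w"
    have b: "aff w' zt \<le> (1 - t) * F z + t * inner (fst w) (snd w)" if "w' \<in> G" for w'
    proof -
      have "aff w' zt = (1 - t) * aff w' z + t * aff w' w" unfolding zt_def by (rule aff_comb) simp
      also have "\<dots> \<le> (1 - t) * F z + t * inner (fst w) (snd w)"
        using Fup[OF zD that] aff_self[OF wG that] t
        by (intro add_mono mult_left_mono) auto
      finally show ?thesis .
    qed
    then have "zt \<in> D" unfolding D_def by blast
    then have "h z \<le> h zt" by (rule zmin)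
    moreover have "F zt \<le> (1 - t) * F z + t * inner (fst w) (snd w)" using Fle b by blast
    moreover have "zt = z + t *\<^sub>R (w - z)" unfolding zt_def by (simp add: algebra_simps)
    moreover have "(norm (z + t *\<^sub>R (w - z)))\<^sup>2 = (norm z)\<^sup>2 + 2 * t * inner z (w - z) + t\<^sup>2 * (norm (w - z))\<^sup>2"
      unfolding power2_norm_eq_inner by (simp add: inner_add_left inner_add_right inner_commute
            power2_eq_square algebra_simps)
    ultimately have "t * F z \<le> t * (inner (fst w) (snd w) + inner z (w - z) + t * ((norm (w - z))\<^sup>2/2))"
      unfolding h_def by (simp add: algebra_simps power2_eq_square)
    then show "F z \<le> inner (fst w) (snd w) + inner z (w - z) + t * ((norm (w - z))\<^sup>2/2)"
      using t by simp
  qed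
  obtain xh uh where zeq: "z = (xh, uh)" by (cases z)
  have key: "inner (xh + uh) (xh + uh) \<le> inner (y + uh) (v + xh)" if "v \<in> A y" for y v
  proof -
    have "(y,v) \<in> G" using that unfolding G_def by simp
    from var[OF this] Fge[OF zD] have "inner xh uh \<le> inner y v + inner (xh, uh) ((y, v) - (xh, uh))"
      unfolding zeq by simp
    then show ?thesis by (simp add: inner_add_left inner_add_right inner_diff_left inner_diff_right
          inner_commute algebra_simps)
  qed
  have inA: "- xh \<in> A (- uh)"
  proof (rule maxmono_related[OF mm])
    fix y v assume "v \<in> A y"
    from key[OF this] have "0 \<le> inner (y + uh) (v + xh)" using inner_ge_zero order_trans by blast
    then show "0 \<le> inner (- uh - y) (- xh - v)"
      by (simp add: inner_add_left inner_add_right inner_diff_left inner_diff_right inner_commute algebra_simps)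
  qed
  from key[OF inA] have "inner (xh + uh) (xh + uh) \<le> 0" by simp
  then have "xh + uh = 0" by (rule inner_self_le0)
  then have "xh = - uh" by (simp add: eq_neg_iff_add_eq_0)
  then have "- (- uh) \<in> A (- uh)" using inA by simp
  then show ?thesis by blast
qed

lemma minty:
  fixes A :: "'a::{real_inner,complete_space} \<Rightarrow> 'a set"
  assumes mm: "maximal_monotone A"
  shows "\<exists>p. z - p \<in> A p"
proof -
  define A' where "A' x = (\<lambda>u. u - z) ` A x" for x
  have "maximal_monotone A'"
    unfolding maximal_monotone_def monotone_op_def
  proof (intro conjI allI impI)
    fix x y u v assume "u \<in> A' x" "v \<in> A' y"
    then obtain u' v' where "u' \<in> A x" "v' \<in> A y" "u = u' - z" "v = v' - z" unfolding A'_def by blast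
    then show "0 \<le> inner (x - y) (u - v)" using maxmono_mono[OF mm] by simp
  next
    fix x u assume h: "\<forall>y v. v \<in> A' y \<longrightarrow> 0 \<le> inner (x - y) (u - v)"
    have "u + z \<in> A x"
    proof (rule maxmono_related[OF mm])
      fix y v assume "v \<in> A y"
      then have "v - z \<in> A' y" unfolding A'_def by blast
      then have "0 \<le> inner (x - y) (u - (v - z))" using h by blast
      then show "0 \<le> inner (x - y) (u + z - v)" by (simp add: algebra_simps)
    qed
    then show "u \<in> A' x" unfolding A'_def by (metis add_diff_cancel image_eqI)
  qed
  from minty0[OF this] obtain p where "- p \<in> A' p" by blast
  then obtain u where "u \<in> A p" "- p = u - z" unfolding A'_def by blast
  then have "z - p = u" by (simp add: algebra_simps)
  then show ?thesis using \<open>u \<in> A p\<close> by blast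
qed

lemma resolvent_unique:
  assumes mm: "maximal_monotone A" and p1: "z - p1 \<in> A p1" and p2: "z - p2 \<in> A p2"
  shows "p1 = p2"
proof -
  have "0 \<le> inner (p1 - p2) ((z - p1) - (z - p2))" using maxmono_mono[OF mm p1 p2] .
  then have "inner (p1 - p2) (p1 - p2) \<le> 0" by (simp add: inner_diff_left inner_diff_right inner_commute)
  then show ?thesis by (metis antisym inner_ge_zero inner_eq_zero_iff eq_iff_diff_eq_0)
qed

lemma resolvent_prop:
  fixes A :: "'a::{real_inner,complete_space} \<Rightarrow> 'a set"
  assumes mm: "maximal_monotone A"
  shows "z - resolvent A z \<in> A (resolvent A z)"
  unfolding resolvent_def
  by (rule theI') (use minty[OF mm] resolvent_unique[OF mm] in blast)

lemma resolvent_eq: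
  fixes A :: "'a::{real_inner,complete_space} \<Rightarrow> 'a set"
  assumes mm: "maximal_monotone A" and "z - p \<in> A p"
  shows "resolvent A z = p"
  using resolvent_unique[OF mm resolvent_prop[OF mm] assms(2)] .

lemma resolvent_fne:
  fixes A :: "'a::{real_inner,complete_space} \<Rightarrow> 'a set"
  assumes mm: "maximal_monotone A"
  shows "(norm (resolvent A z1 - resolvent A z2))\<^sup>2 \<le> inner (resolvent A z1 - resolvent A z2) (z1 - z2)"
proof -
  have "0 \<le> inner (resolvent A z1 - resolvent A z2) ((z1 - resolvent A z1) - (z2 - resolvent A z2))"
    using maxmono_mono[OF mm resolvent_prop[OF mm] resolvent_prop[OF mm]] .
  then show ?thesis unfolding power2_norm_eq_inner
    by (simp add: inner_diff_left inner_diff_right inner_commute algebra_simps)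
qed

lemma inv_id_plus_prop:
  fixes T :: "'a::{real_inner,complete_space} \<Rightarrow> 'a"
  assumes lin: "linear T" and pos: "\<And>x. 0 \<le> inner x (T x)"
  shows "inv_id_plus T y + T (inv_id_plus T y) = y"
    and "z + T z = y \<Longrightarrow> inv_id_plus T y = z"
proof -
  have uniq: "z1 = z2" if "z1 + T z1 = y" "z2 + T z2 = y" for z1 z2
  proof -
    have "(z1 - z2) + T (z1 - z2) = (z1 + T z1) - (z2 + T z2)" by (simp add: linear_diff[OF lin] algebra_simps)
    also have "\<dots> = 0" using that by simp
    finally have "(z1 - z2) + T (z1 - z2) = 0" .
    then have "inner (z1 - z2) ((z1 - z2) + T (z1 - z2)) = 0" by simp
    then have "inner (z1 - z2) (z1 - z2) \<le> 0" using pos[of "z1 - z2"] by (simp add: inner_add_right)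
    then show ?thesis by (metis antisym inner_ge_zero inner_eq_zero_iff eq_iff_diff_eq_0)
  qed
  define A where "A x = {T x}" for x
  have mm: "maximal_monotone A"
    unfolding maximal_monotone_def monotone_op_def A_def
  proof (intro conjI allI impI)
    fix x y u v assume "u \<in> {T x}" "v \<in> {T y}"
    then show "0 \<le> inner (x - y) (u - v)" using pos[of "x - y"] linear_diff[OF lin] by simp
  next
    fix x u assume h: "\<forall>y v. v \<in> {T y} \<longrightarrow> 0 \<le> inner (x - y) (u - v)"
    have ge: "0 \<le> inner d (u - T x)" for d
    proof (rule le_eps[where c = "inner d (T d)"])
      fix t :: real assume t: "0 < t" "t \<le> 1"
      have "0 \<le> inner (x - (x - t *\<^sub>R d)) (u - T (x - t *\<^sub>R d))" using h by blast
      also have "\<dots> = t * inner d (u - T x) + t * (t * inner d (T d))"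
      proof -
        have e: "T (x - t *\<^sub>R d) = T x - t *\<^sub>R T d"
          using linear_diff[OF lin] linear_scale[OF lin] by metis
        show ?thesis unfolding e by (simp add: inner_diff_right inner_add_right algebra_simps)
      qed
      finally have "0 \<le> t * (inner d (u - T x) + t * inner d (T d))" by (simp add: algebra_simps)
      then show "0 \<le> inner d (u - T x) + t * inner d (T d)" using t(1) by (metis not_le mult_pos_neg)
    qed
    have "0 \<le> inner (- (u - T x)) (u - T x)" by (rule ge)
    then have "inner (u - T x) (u - T x) \<le> 0" by (simp only: inner_minus_left)
    then have "u - T x = 0" by (rule inner_self_le0)
    then show "u \<in> {T x}" by simp
  qed
  have ex: "resolvent A y + T (resolvent A y) = y"
    using resolvent_prop[OF mm, of y] unfolding A_def by (simp add: algebra_simps)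
  show "inv_id_plus T y + T (inv_id_plus T y) = y"
    unfolding inv_id_plus_def
  proof (rule theI[of "\<lambda>z. z + T z = y" "resolvent A y"])
    show "resolvent A y + T (resolvent A y) = y" by (rule ex)
    show "x = resolvent A y" if "x + T x = y" for x using uniq[OF that ex] .
  qed
  show "inv_id_plus T y = z" if "z + T z = y"
    unfolding inv_id_plus_def
  proof (rule the_equality)
    show "z + T z = y" by (rule that)
    show "x = z" if "x + T x = y" for x using uniq[OF \<open>x + T x = y\<close> \<open>z + T z = y\<close>] .
  qed
qed


lemma qfejer:
  fixes a c :: "nat \<Rightarrow> real"
  assumes a0: "\<And>n. 0 \<le> a n" and step: "\<And>n. a (Suc n) \<le> a n + c n"
    and sc: "summable c" and c0: "\<And>n. 0 \<le> c n"
  shows "convergent a"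
proof -
  define b where "b n = a n - (\<Sum>k<n. c k)" for n
  have "\<forall>n. b (Suc n) \<le> b n"
  proof
    fix n
    have "b (Suc n) = a (Suc n) - c n - (\<Sum>k<n. c k)" by (simp add: b_def)
    then show "b (Suc n) \<le> b n" using step[of n] unfolding b_def by linarith
  qed
  then have "decseq b" unfolding decseq_Suc_iff by blast
  moreover have "\<forall>i. - suminf c \<le> b i"
  proof
    fix i
    have "(\<Sum>k<i. c k) \<le> suminf c" using sum_le_suminf[OF sc, of "{..<i}"] c0 by simp
    then show "- suminf c \<le> b i" unfolding b_def using a0[of i] by linarith
  qed
  ultimately obtain L where L: "b \<longlonglongrightarrow> L" using decseq_convergent by blast
  have "(\<lambda>n. b n + (\<Sum>k<n. c k)) \<longlonglongrightarrow> L + suminf c"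
    using L summable_LIMSEQ[OF sc] by (intro tendsto_intros)
  then show ?thesis unfolding b_def convergent_def by auto
qed

lemma convex_norm_id:
  fixes a b :: "'a::real_inner"
  shows "(norm ((1 - m) *\<^sub>R a + m *\<^sub>R b))\<^sup>2 = (1 - m) * (norm a)\<^sup>2 + m * (norm b)\<^sup>2 - m * (1 - m) * (norm (a - b))\<^sup>2"
  unfolding power2_norm_eq_inner
  by (simp add: inner_add_left inner_add_right inner_diff_left inner_diff_right inner_commute algebra_simps)

lemma not_tendsto_subseq:
  fixes X :: "nat \<Rightarrow> real"
  assumes "\<not> X \<longlonglongrightarrow> L"
  shows "\<exists>e>0. \<exists>s::nat\<Rightarrow>nat. strict_mono s \<and> (\<forall>n. e \<le> \<bar>X (s n) - L\<bar>)"
proof -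
  from assms obtain e where e: "e > 0" "\<forall>N. \<exists>n\<ge>N. \<not> dist (X n) L < e"
    unfolding LIMSEQ_def by blast
  define S where "S = {n. e \<le> \<bar>X n - L\<bar>}"
  have inf: "infinite S" unfolding infinite_nat_iff_unbounded_le S_def using e(2)
    by (auto simp: dist_real_def not_less)
  have sm: "strict_mono (enumerate S)" unfolding strict_mono_def using enumerate_mono[OF _ inf] by blast
  have "enumerate S n \<in> S" for n by (rule enumerate_in_set[OF inf])
  then have al: "\<forall>n. e \<le> \<bar>X (enumerate S n) - L\<bar>" unfolding S_def by simp
  show ?thesis using e(1) sm al by blast
qed

lemma demiclosed:
  fixes y :: "nat \<Rightarrow> 'a::real_inner"
  assumes ne: "\<And>a b. norm (N a - N b) \<le> norm (a - b)"
    and wc: "y \<rightharpoonup> w" and ar: "(\<lambda>j. N (y j) - y j) \<longlonglongrightarrow> 0" and yb: "\<And>j. norm (y j) \<le> B"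
  shows "N w = w"
proof -
  define e where "e j = norm (N (y j) - y j)" for j
  have e0: "e \<longlonglongrightarrow> 0" unfolding e_def using tendsto_norm_zero[OF ar] .
  have ineq: "(norm (w - N w))\<^sup>2 \<le> (e j)\<^sup>2 + 2 * (e j * norm (y j - w)) - 2 * inner (y j - w) (w - N w)" for j
  proof -
    have "norm (y j - N w) \<le> e j + norm (y j - w)"
    proof -
      have "norm (y j - N w) \<le> norm (y j - N (y j)) + norm (N (y j) - N w)"
        using norm_triangle_ineq[of "y j - N (y j)" "N (y j) - N w"] by simp
      also have "\<dots> \<le> e j + norm (y j - w)" unfolding e_def using ne[of "y j" w] by (simp add: norm_minus_commute)
      finally show ?thesis .
    qed
    then have "(norm (y j - N w))\<^sup>2 \<le> (e j + norm (y j - w))\<^sup>2"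
      by (intro power_mono) auto
    moreover have "(norm (y j - N w))\<^sup>2 = (norm (y j - w))\<^sup>2 + 2 * inner (y j - w) (w - N w) + (norm (w - N w))\<^sup>2"
    proof -
      have e1: "y j - N w = (y j - w) + (w - N w)" by simp
      have "inner ((y j - w) + (w - N w)) ((y j - w) + (w - N w)) =
            inner (y j - w) (y j - w) + 2 * inner (y j - w) (w - N w) + inner (w - N w) (w - N w)"
        by (simp only: inner_add_left inner_add_right inner_commute[of "w - N w" "y j - w"])
      then show ?thesis unfolding power2_norm_eq_inner e1[symmetric] by simp
    qed
    moreover have "(e j + norm (y j - w))\<^sup>2 = (e j)\<^sup>2 + 2 * (e j * norm (y j - w)) + (norm (y j - w))\<^sup>2"
      by (simp add: power2_eq_square algebra_simps)
    ultimately show ?thesis by linarith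
  qed
  have t1: "(\<lambda>j. inner (y j - w) (w - N w)) \<longlonglongrightarrow> 0"
  proof -
    have "(\<lambda>j. inner (y j) (w - N w)) \<longlonglongrightarrow> inner w (w - N w)" using wc unfolding weak_conv_def by blast
    then have "(\<lambda>j. inner (y j) (w - N w) - inner w (w - N w)) \<longlonglongrightarrow> 0" by (rule LIM_zero)
    then show ?thesis by (simp add: inner_diff_left)
  qed
  have nb: "norm (y j - w) \<le> B + norm w" for j
    using norm_triangle_ineq4[of "y j" w] yb[of j] by linarith
  have t2: "(\<lambda>j. e j * norm (y j - w)) \<longlonglongrightarrow> 0"
  proof (rule tendsto_sandwich[where f="\<lambda>j. 0" and h="\<lambda>j. e j * (B + norm w)"])
    show "\<forall>\<^sub>F j in sequentially. 0 \<le> e j * norm (y j - w)" unfolding e_def by simp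
    show "\<forall>\<^sub>F j in sequentially. e j * norm (y j - w) \<le> e j * (B + norm w)"
      using nb unfolding e_def by (intro always_eventually allI mult_left_mono) auto
    show "(\<lambda>j. 0) \<longlonglongrightarrow> (0::real)" by simp
    show "(\<lambda>j. e j * (B + norm w)) \<longlonglongrightarrow> 0" using tendsto_mult[OF e0 tendsto_const, of "B + norm w"] by simp
  qed
  have lim: "(\<lambda>j. (e j)\<^sup>2 + 2 * (e j * norm (y j - w)) - 2 * inner (y j - w) (w - N w)) \<longlonglongrightarrow> 0\<^sup>2 + 2 * 0 - 2 * 0"
    using e0 t1 t2 by (intro tendsto_intros)
  have "(norm (w - N w))\<^sup>2 \<le> 0\<^sup>2 + 2 * 0 - 2 * 0"
    by (rule LIMSEQ_le_const[OF lim]) (use ineq in auto)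
  then show ?thesis by simp
qed

lemma KM:
  fixes z :: "nat \<Rightarrow> 'a::{real_inner,complete_space}" and N :: "'a \<Rightarrow> 'a"
  assumes ne: "\<And>a b. norm (N a - N b) \<le> norm (a - b)"
    and fx: "N f = f"
    and step: "\<And>n. z (Suc n) = z n + mu n *\<^sub>R (N (z n) - z n) + eps n"
    and mu: "\<And>n. 0 < mu n \<and> mu n < 1"
    and dv: "\<not> summable (\<lambda>n. mu n * (1 - mu n))"
    and es: "summable (\<lambda>n. norm (eps n))"
  shows "(\<lambda>n. N (z n) - z n) \<longlonglongrightarrow> 0" and "\<exists>zb. N zb = zb \<and> z \<rightharpoonup> zb"
proof -
  define g where "g n = z n + mu n *\<^sub>R (N (z n) - z n)" for n
  define d where "d n = norm (N (z n) - z n)" for n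
  have zs: "z (Suc n) = g n + eps n" for n unfolding g_def using step by simp
  have gsq: "(norm (g n - f'))\<^sup>2 \<le> (norm (z n - f'))\<^sup>2 - mu n * (1 - mu n) * (d n)\<^sup>2" if "N f' = f'" for n f'
  proof -
    have "g n - f' = (1 - mu n) *\<^sub>R (z n - f') + mu n *\<^sub>R (N (z n) - f')"
      unfolding g_def by (simp add: algebra_simps)
    then have "(norm (g n - f'))\<^sup>2 = (1 - mu n) * (norm (z n - f'))\<^sup>2 + mu n * (norm (N (z n) - f'))\<^sup>2
        - mu n * (1 - mu n) * (norm ((z n - f') - (N (z n) - f')))\<^sup>2"
      using convex_norm_id by metis
    moreover have "(norm (N (z n) - f'))\<^sup>2 \<le> (norm (z n - f'))\<^sup>2"
      using ne[of "z n" f'] that by (intro power_mono) auto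
    moreover have "norm ((z n - f') - (N (z n) - f')) = d n" unfolding d_def
      by (simp add: norm_minus_commute)
    moreover have "mu n * (norm (N (z n) - f'))\<^sup>2 \<le> mu n * (norm (z n - f'))\<^sup>2"
      using calculation(2) mu[of n] by (intro mult_left_mono) auto
    ultimately show ?thesis by (simp add: algebra_simps)
  qed
  have gle: "norm (g n - f') \<le> norm (z n - f')" if "N f' = f'" for n f'
  proof -
    have "0 \<le> mu n * (1 - mu n) * (d n)\<^sup>2" using mu[of n] by simp
    then have "(norm (g n - f'))\<^sup>2 \<le> (norm (z n - f'))\<^sup>2" using gsq[OF that, of n] by linarith
    then show ?thesis by (rule power2_le_imp_le) simp
  qed
  have zle: "norm (z (Suc n) - f') \<le> norm (z n - f') + norm (eps n)" if "N f' = f'" for n f'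
  proof -
    have "z (Suc n) - f' = (g n - f') + eps n" unfolding zs by simp
    then have "norm (z (Suc n) - f') \<le> norm (g n - f') + norm (eps n)"
      by (simp only: norm_triangle_ineq)
    then show ?thesis using gle[OF that, of n] by linarith
  qed
  have conv: "convergent (\<lambda>n. norm (z n - f'))" if "N f' = f'" for f'
    by (rule qfejer[where c = "\<lambda>n. norm (eps n)"]) (use zle[OF that] es in auto)
  obtain C where C0: "\<forall>n. norm (norm (z n - f)) \<le> C"
    using convergent_imp_Bseq[OF conv[OF fx]] unfolding Bseq_def by blast
  have C: "norm (z n - f) \<le> C" for n using C0 by simp
  define S where "S = suminf (\<lambda>n. norm (eps n))"
  have eS: "norm (eps n) \<le> S" for n
    unfolding S_def using sum_le_suminf[OF es, of "{n}"] by simp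
  define c where "c n = (2 * C + S) * norm (eps n)" for n
  have sc: "summable c" unfolding c_def using es by (rule summable_mult)
  have dsq: "mu n * (1 - mu n) * (d n)\<^sup>2 \<le> (norm (z n - f))\<^sup>2 - (norm (z (Suc n) - f))\<^sup>2 + c n" for n
  proof -
    have "z (Suc n) - f = (g n - f) + eps n" unfolding zs by simp
    then have a: "norm (z (Suc n) - f) \<le> norm (g n - f) + norm (eps n)"
      by (simp only: norm_triangle_ineq)
    have "(norm (z (Suc n) - f))\<^sup>2 \<le> (norm (g n - f) + norm (eps n))\<^sup>2"
      using a by (intro power_mono) auto
    also have "\<dots> = (norm (g n - f))\<^sup>2 + (2 * norm (g n - f) + norm (eps n)) * norm (eps n)"
      by (simp add: power2_eq_square algebra_simps)
    also have "\<dots> \<le> (norm (g n - f))\<^sup>2 + c n"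
    proof -
      have "norm (g n - f) \<le> C" using gle[OF fx, of n] C[of n] by linarith
      then have "2 * norm (g n - f) + norm (eps n) \<le> 2 * C + S" using eS[of n] by linarith
      then show ?thesis unfolding c_def by (simp add: mult_right_mono)
    qed
    finally show ?thesis using gsq[OF fx, of n] by linarith
  qed
  have sd: "summable (\<lambda>n. mu n * (1 - mu n) * (d n)\<^sup>2)"
  proof (rule summableI_nonneg_bounded[where x = "(norm (z 0 - f))\<^sup>2 + suminf c"])
    show "0 \<le> mu n * (1 - mu n) * (d n)\<^sup>2" for n using mu[of n] by simp
    show "(\<Sum>i<n. mu i * (1 - mu i) * (d i)\<^sup>2) \<le> (norm (z 0 - f))\<^sup>2 + suminf c" for n
    proof -
      have "(\<Sum>i<n. mu i * (1 - mu i) * (d i)\<^sup>2) \<le> (\<Sum>i<n. (norm (z i - f))\<^sup>2 - (norm (z (Suc i) - f))\<^sup>2 + c i)"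
        using dsq by (intro sum_mono) auto
      also have "\<dots> = (norm (z 0 - f))\<^sup>2 - (norm (z n - f))\<^sup>2 + (\<Sum>i<n. c i)"
        using sum_lessThan_telescope'[of "\<lambda>i. (norm (z i - f))\<^sup>2" n] by (simp add: sum.distrib)
      also have "\<dots> \<le> (norm (z 0 - f))\<^sup>2 + suminf c"
      proof -
        have "(\<Sum>i<n. c i) \<le> suminf c" using sum_le_suminf[OF sc, of "{..<n}"] unfolding c_def
          using C[of 0] norm_ge_zero eS[of 0] by (smt (verit) finite_lessThan mult_nonneg_nonneg)
        then show ?thesis using zero_le_power2[of "norm (z n - f)"] by linarith
      qed
      finally show ?thesis .
    qed
  qed
  have dstep: "d (Suc n) \<le> d n + 2 * norm (eps n)" for n
  proof -
    have g1: "norm (g n - N (g n)) \<le> d n"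
    proof -
      have "g n - N (g n) = (1 - mu n) *\<^sub>R (z n - N (z n)) + (N (z n) - N (g n))"
        unfolding g_def by (simp add: algebra_simps)
      then have "norm (g n - N (g n)) \<le> norm ((1 - mu n) *\<^sub>R (z n - N (z n))) + norm (N (z n) - N (g n))"
        by (metis norm_triangle_ineq)
      also have "\<dots> \<le> (1 - mu n) * d n + norm (z n - g n)"
        using ne[of "z n" "g n"] mu[of n] unfolding d_def by (simp add: norm_minus_commute)
      also have "norm (z n - g n) = mu n * d n"
        unfolding g_def d_def using mu[of n] by simp
      finally show ?thesis by (simp add: algebra_simps)
    qed
    have "d (Suc n) = norm ((z (Suc n) - g n) + (g n - N (g n)) + (N (g n) - N (z (Suc n))))"
      unfolding d_def by (simp add: norm_minus_commute algebra_simps)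
    also have "\<dots> \<le> norm (z (Suc n) - g n) + norm (g n - N (g n)) + norm (N (g n) - N (z (Suc n)))"
      by (metis norm_triangle_ineq order_trans add_right_mono)
    also have "\<dots> \<le> norm (eps n) + d n + norm (eps n)"
      using g1 ne[of "g n" "z (Suc n)"] unfolding zs by (simp add: norm_minus_commute)
    finally show ?thesis by simp
  qed
  have dconv: "convergent d"
    by (rule qfejer[where c = "\<lambda>n. 2 * norm (eps n)"]) (use dstep summable_mult[OF es, of 2] in \<open>auto simp: d_def\<close>)
  then obtain delta where dl: "d \<longlonglongrightarrow> delta" unfolding convergent_def by blast
  have "delta = 0"
  proof (rule ccontr)
    assume "delta \<noteq> 0"
    moreover have "0 \<le> delta" by (rule LIMSEQ_le_const[OF dl]) (auto simp: d_def)
    ultimately have dp: "0 < delta" by simp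
    then have "\<forall>\<^sub>F n in sequentially. delta / 2 < d n"
      using dl order_tendstoD(1)[OF dl, of "delta/2"] by simp
    then have ev: "\<forall>\<^sub>F n in sequentially. norm (mu n * (1 - mu n)) \<le> (4 / delta\<^sup>2) * (mu n * (1 - mu n) * (d n)\<^sup>2)"
    proof (rule eventually_mono)
      fix n assume h: "delta / 2 < d n"
      have "(delta/2)\<^sup>2 \<le> (d n)\<^sup>2" using h dp by (intro power_mono) auto
      then have "1 \<le> (4 / delta\<^sup>2) * (d n)\<^sup>2" using dp by (simp add: field_simps power2_eq_square)
      moreover have "0 \<le> mu n * (1 - mu n)" using mu[of n] by simp
      ultimately have A: "mu n * (1 - mu n) * 1 \<le> mu n * (1 - mu n) * ((4 / delta\<^sup>2) * (d n)\<^sup>2)"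
        by (intro mult_left_mono) auto
      have B: "norm (mu n * (1 - mu n)) = mu n * (1 - mu n)" using mu[of n] by simp
      have C: "(4 / delta\<^sup>2) * (mu n * (1 - mu n) * (d n)\<^sup>2) = mu n * (1 - mu n) * ((4 / delta\<^sup>2) * (d n)\<^sup>2)"
        by (simp only: mult.assoc mult.commute mult.left_commute)
      show "norm (mu n * (1 - mu n)) \<le> (4 / delta\<^sup>2) * (mu n * (1 - mu n) * (d n)\<^sup>2)"
        unfolding B C using A by (simp only: mult_1_right)
    qed
    have "summable (\<lambda>n. mu n * (1 - mu n))"
      by (rule summable_comparison_test_ev[OF ev summable_mult[OF sd]])
    then show False using dv by contradiction
  qed
  then have "d \<longlonglongrightarrow> 0" using dl by simp
  then show ar: "(\<lambda>n. N (z n) - z n) \<longlonglongrightarrow> 0" unfolding d_def using tendsto_norm_zero_iff by blast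
  have zb: "norm (z n) \<le> C + norm f" for n using C[of n] norm_triangle_ineq2[of "z n" f] by linarith
  have demi: "N w = w" if "strict_mono r" "(z \<circ> r) \<rightharpoonup> w" for r w
  proof (rule demiclosed[OF ne that(2)])
    show "(\<lambda>j. N ((z \<circ> r) j) - (z \<circ> r) j) \<longlonglongrightarrow> 0"
      using LIMSEQ_subseq_LIMSEQ[OF ar that(1)] by (simp add: o_def)
    show "norm ((z \<circ> r) j) \<le> C + norm f" for j using zb by simp
  qed
  have opial: "convergent (\<lambda>n. inner (z n) (w2 - w1))" if w12: "N w1 = w1" "N w2 = w2" for w1 w2
  proof -
    have "convergent (\<lambda>n. ((norm (z n - w1))\<^sup>2 - (norm (z n - w2))\<^sup>2 - (norm w1)\<^sup>2 + (norm w2)\<^sup>2) / 2)"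
    proof -
      obtain L1 L2 where L: "(\<lambda>n. norm (z n - w1)) \<longlonglongrightarrow> L1" "(\<lambda>n. norm (z n - w2)) \<longlonglongrightarrow> L2"
        using conv[OF w12(1)] conv[OF w12(2)] unfolding convergent_def by blast
      have "(\<lambda>n. ((norm (z n - w1))\<^sup>2 - (norm (z n - w2))\<^sup>2 - (norm w1)\<^sup>2 + (norm w2)\<^sup>2) / 2)
         \<longlonglongrightarrow> (L1\<^sup>2 - L2\<^sup>2 - (norm w1)\<^sup>2 + (norm w2)\<^sup>2) / 2"
        using L by (intro tendsto_intros) auto
      then show ?thesis unfolding convergent_def by blast
    qed
    moreover have "((norm (z n - w1))\<^sup>2 - (norm (z n - w2))\<^sup>2 - (norm w1)\<^sup>2 + (norm w2)\<^sup>2) / 2 = inner (z n) (w2 - w1)" for n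
      unfolding power2_norm_eq_inner
      by (simp add: inner_diff_left inner_diff_right inner_commute algebra_simps) argo
    ultimately show ?thesis by simp
  qed
  obtain r w where r: "strict_mono r" "(z \<circ> r) \<rightharpoonup> w" using weak_subseq[of z, OF zb] by blast
  have wF: "N w = w" by (rule demi[OF r])
  have "z \<rightharpoonup> w" unfolding weak_conv_def
  proof (rule allI, rule ccontr)
    fix c assume nc: "\<not> (\<lambda>n. inner (z n) c) \<longlonglongrightarrow> inner w c"
    obtain e and s :: "nat \<Rightarrow> nat" where es': "e > 0" "strict_mono s" "\<And>n. e \<le> \<bar>inner (z (s n)) c - inner w c\<bar>"
      using not_tendsto_subseq[OF nc] by blast
    have zsb: "norm ((z \<circ> s) n) \<le> C + norm f" for n using zb[of "s n"] by simp
    obtain r' w' where r': "strict_mono r'" "((z \<circ> s) \<circ> r') \<rightharpoonup> w'"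
      using weak_subseq[of "z \<circ> s", OF zsb] by blast
    have sr: "strict_mono (s \<circ> r')" using es'(2) r'(1) by (rule strict_mono_o)
    have w'F: "N w' = w'" using demi[OF sr r'(2)[unfolded comp_assoc]] .
    have t: "(\<lambda>j. inner (((z \<circ> s) \<circ> r') j) c) \<longlonglongrightarrow> inner w' c"
      using r'(2) unfolding weak_conv_def by blast
    have lim_e: "(\<lambda>j. \<bar>inner (((z \<circ> s) \<circ> r') j) c - inner w c\<bar>) \<longlonglongrightarrow> \<bar>inner w' c - inner w c\<bar>"
      by (rule tendsto_rabs[OF tendsto_diff[OF t tendsto_const]])
    have all_e: "\<forall>n\<ge>0. e \<le> \<bar>inner (((z \<circ> s) \<circ> r') n) c - inner w c\<bar>"
      using es'(3) by simp
    have "e \<le> \<bar>inner w' c - inner w c\<bar>" by (rule LIMSEQ_le_const[OF lim_e]) (use all_e in blast)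
    then have neq: "w' \<noteq> w" using es'(1) by auto
    obtain lm where lm: "(\<lambda>n. inner (z n) (w' - w)) \<longlonglongrightarrow> lm"
      using opial[OF wF w'F] unfolding convergent_def by blast
    have "((\<lambda>n. inner (z n) (w' - w)) \<circ> r) \<longlonglongrightarrow> inner w (w' - w)"
      using r(2) unfolding weak_conv_def by (simp add: o_def)
    moreover have "((\<lambda>n. inner (z n) (w' - w)) \<circ> r) \<longlonglongrightarrow> lm" by (rule LIMSEQ_subseq_LIMSEQ[OF lm r(1)])
    ultimately have l1: "inner w (w' - w) = lm" by (rule LIMSEQ_unique)
    have "((\<lambda>n. inner (z n) (w' - w)) \<circ> (s \<circ> r')) \<longlonglongrightarrow> inner w' (w' - w)"
      using r'(2)[unfolded comp_assoc] unfolding weak_conv_def by (simp add: o_def)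
    moreover have "((\<lambda>n. inner (z n) (w' - w)) \<circ> (s \<circ> r')) \<longlonglongrightarrow> lm" by (rule LIMSEQ_subseq_LIMSEQ[OF lm sr])
    ultimately have l2: "inner w' (w' - w) = lm" by (rule LIMSEQ_unique)
    have "inner (w' - w) (w' - w) = 0" using l1 l2 by (simp add: inner_diff_left)
    then show False using neq by simp
  qed
  then show "\<exists>zb. N zb = zb \<and> z \<rightharpoonup> zb" using wF by blast
qed


locale setting =
  fixes A :: "'h::{real_inner,complete_space} \<Rightarrow> 'h set"
    and B :: "'g::{real_inner,complete_space} \<Rightarrow> 'g set"
    and L :: "'h \<Rightarrow> 'g" and Ls :: "'g \<Rightarrow> 'h"
  assumes A_mm: "maximal_monotone A"
    and B_mm: "maximal_monotone B"
    and L_lin: "bounded_linear L"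
    and Ls_adj: "\<forall>z g. inner (L z) g = inner z (Ls g)"
begin

lemma adj: "inner (L z) g = inner z (Ls g)" using Ls_adj by blast

lemma L_linear: "linear L" using L_lin bounded_linear.linear by blast
lemma L_add: "L (a + b) = L a + L b" using linear_add[OF L_linear] .
lemma L_diff: "L (a - b) = L a - L b" using linear_diff[OF L_linear] .
lemma L_scale: "L (c *\<^sub>R a) = c *\<^sub>R L a" using linear_scale[OF L_linear] .
lemma L_minus: "L (- a) = - L a" using linear_neg[OF L_linear] .

lemma inner_eq_vec: "(\<And>z. inner z a = inner z b) \<Longrightarrow> a = b" for a b :: "'x::real_inner"
proof -
  assume h: "\<And>z. inner z a = inner z b"
  have "inner (a - b) (a - b) = 0" using h[of "a - b"] by (simp add: inner_diff_right)
  then show "a = b" by simp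
qed

lemma Ls_add: "Ls (a + b) = Ls a + Ls b"
  by (rule inner_eq_vec) (simp add: adj[symmetric] inner_add_right)
lemma Ls_scale: "Ls (c *\<^sub>R a) = c *\<^sub>R Ls a"
  by (rule inner_eq_vec) (simp add: adj[symmetric])
lemma Ls_diff: "Ls (a - b) = Ls a - Ls b"
  by (rule inner_eq_vec) (simp add: adj[symmetric] inner_diff_right)
lemma Ls_minus: "Ls (- a) = - Ls a"
  by (rule inner_eq_vec) (simp add: adj[symmetric])
lemma Ls_linear: "linear Ls"
  by (rule linearI) (simp_all add: Ls_add Ls_scale)

definition Q where "Q = inv_id_plus (Ls \<circ> L)"
definition R where "R = inv_id_plus (L \<circ> Ls)"

lemma Q_eq: "Q y + Ls (L (Q y)) = y" and Q_uniq: "x + Ls (L x) = y \<Longrightarrow> Q y = x"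
proof -
  have lin: "linear (Ls \<circ> L)" using linear_compose[OF L_linear Ls_linear] .
  have pos: "0 \<le> inner x ((Ls \<circ> L) x)" for x by (simp add: adj[symmetric])
  show "Q y + Ls (L (Q y)) = y" using inv_id_plus_prop(1)[OF lin pos, of y] unfolding Q_def comp_def by simp
  show "Q y = x" if "x + Ls (L x) = y" using inv_id_plus_prop(2)[OF lin pos, of x y] that unfolding Q_def comp_def by simp
qed

lemma R_eq: "R y + L (Ls (R y)) = y"
proof -
  have lin: "linear (L \<circ> Ls)" using linear_compose[OF Ls_linear L_linear] .
  have pos: "0 \<le> inner x ((L \<circ> Ls) x)" for x
  proof -
    have "inner x (L (Ls x)) = inner (Ls x) (Ls x)" by (metis adj inner_commute)
    then show ?thesis by simp
  qed
  show "R y + L (Ls (R y)) = y" using inv_id_plus_prop(1)[OF lin pos, of y] unfolding R_def comp_def by simp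
qed

definition inV :: "'h \<times> 'g \<Rightarrow> bool" where "inV z \<longleftrightarrow> snd z = L (fst z)"
definition inW :: "'h \<times> 'g \<Rightarrow> bool" where "inW z \<longleftrightarrow> fst z = - Ls (snd z)"

definition PV :: "'h \<times> 'g \<Rightarrow> 'h \<times> 'g" where
  "PV z = (Q (fst z + Ls (snd z)), L (Q (fst z + Ls (snd z))))"

lemma PV_inV: "inV (PV z)" unfolding inV_def PV_def by simp

lemma PV_inW: "inW (z - PV z)"
proof -
  define q where "q = Q (fst z + Ls (snd z))"
  have "q + Ls (L q) = fst z + Ls (snd z)" unfolding q_def by (rule Q_eq)
  then show ?thesis unfolding inW_def PV_def q_def[symmetric]
    by (simp add: Ls_diff algebra_simps)
qed

lemma PV_decomp: assumes "inV a" "inW b" "z = a + b" shows "PV z = a"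
proof -
  obtain x v where a: "a = (x, L x)" and b: "b = (- Ls v, v)"
    using assms(1,2) unfolding inV_def inW_def by (metis prod.collapse)
  have "fst z + Ls (snd z) = x + Ls (L x)" using assms(3) a b by (simp add: Ls_add)
  then have "Q (fst z + Ls (snd z)) = x" using Q_uniq by simp
  then show ?thesis unfolding PV_def a by simp
qed

lemma inV_add: "inV a \<Longrightarrow> inV b \<Longrightarrow> inV (a + b)" unfolding inV_def by (simp add: L_add)
lemma inW_add: "inW a \<Longrightarrow> inW b \<Longrightarrow> inW (a + b)" unfolding inW_def by (simp add: Ls_add)
lemma inV_scale: "inV a \<Longrightarrow> inV (c *\<^sub>R a)" unfolding inV_def by (simp add: L_scale)
lemma inW_scale: "inW a \<Longrightarrow> inW (c *\<^sub>R a)" unfolding inW_def by (simp add: Ls_scale)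
lemma inV_diff: "inV a \<Longrightarrow> inV b \<Longrightarrow> inV (a - b)" unfolding inV_def by (simp add: L_diff)
lemma inW_diff: "inW a \<Longrightarrow> inW b \<Longrightarrow> inW (a - b)" unfolding inW_def by (simp add: Ls_diff)
lemma Ls_0: "Ls 0 = 0" using Ls_scale[of 0 0] by simp
lemma inW_0: "inW 0" unfolding inW_def by (simp add: Ls_0)

lemma PV_add: "PV (a + b) = PV a + PV b"
  by (rule PV_decomp[OF inV_add[OF PV_inV PV_inV] inW_add[OF PV_inW PV_inW, of a b]]) simp
lemma PV_scale: "PV (c *\<^sub>R a) = c *\<^sub>R PV a"
proof (rule PV_decomp)
  show "inV (c *\<^sub>R PV a)" by (rule inV_scale[OF PV_inV])
  show "inW (c *\<^sub>R (a - PV a))" by (rule inW_scale[OF PV_inW])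
qed (simp add: algebra_simps)
lemma PV_diff: "PV (a - b) = PV a - PV b"
  by (rule PV_decomp[OF inV_diff[OF PV_inV PV_inV] inW_diff[OF PV_inW PV_inW, of a b]]) simp
lemma PV_idem: "inV a \<Longrightarrow> PV a = a"
  by (rule PV_decomp[OF _ inW_0]) simp_all

lemma orth: "inV a \<Longrightarrow> inW b \<Longrightarrow> inner a b = 0"
proof -
  assume "inV a" "inW b"
  then obtain x v where a: "a = (x, L x)" and b: "b = (- Ls v, v)"
    unfolding inV_def inW_def by (metis prod.collapse)
  have "inner (L x) v = inner x (Ls v)" by (rule adj)
  then show ?thesis unfolding a b by simp
qed

lemma orth_norm: "inV a \<Longrightarrow> inW b \<Longrightarrow> (norm (a + b))\<^sup>2 = (norm a)\<^sup>2 + (norm b)\<^sup>2"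
  unfolding power2_norm_eq_inner using orth[of a b]
  by (simp add: inner_add_left inner_add_right inner_commute)

lemma PV_adj: "inner (PV z) c = inner z (PV c)"
proof -
  have "inner (PV z) c = inner (PV z) (PV c) + inner (PV z) (c - PV c)" by (simp add: inner_diff_right)
  also have "\<dots> = inner (PV z) (PV c)" using orth[OF PV_inV PV_inW] by simp
  also have "\<dots> = inner (PV z) (PV c) + inner (z - PV z) (PV c)"
    using orth[OF PV_inV PV_inW, of c z] by (simp add: inner_commute)
  also have "\<dots> = inner z (PV c)" by (simp add: inner_diff_left)
  finally show ?thesis .
qed

end


context setting
begin

definition JM :: "'h \<times> 'g \<Rightarrow> 'h \<times> 'g" where "JM z = (resolvent A (fst z), resolvent B (snd z))"
definition RV :: "'h \<times> 'g \<Rightarrow> 'h \<times> 'g" where "RV z = 2 *\<^sub>R PV z - z"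
definition NN :: "'h \<times> 'g \<Rightarrow> 'h \<times> 'g" where "NN z = RV (2 *\<^sub>R JM z - z)"

lemma inW_neg: "inW b \<Longrightarrow> inW (- b)"
  using inW_scale[of b "-1"] by simp

lemma RV_norm: "norm (RV z) = norm z"
proof -
  have "RV z = PV z + - (z - PV z)" unfolding RV_def by (simp add: algebra_simps scaleR_2)
  then have "(norm (RV z))\<^sup>2 = (norm (PV z))\<^sup>2 + (norm (- (z - PV z)))\<^sup>2"
    using orth_norm[OF PV_inV inW_neg[OF PV_inW]] by simp
  moreover have "(norm z)\<^sup>2 = (norm (PV z))\<^sup>2 + (norm (z - PV z))\<^sup>2"
    using orth_norm[OF PV_inV PV_inW, of z z] by simp
  ultimately have "(norm (RV z))\<^sup>2 = (norm z)\<^sup>2" by (simp add: norm_minus_commute)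
  then show ?thesis by (simp add: power2_eq_iff_nonneg)
qed

lemma RV_diff: "RV a - RV b = RV (a - b)"
  unfolding RV_def by (simp add: PV_diff algebra_simps)

lemma JM_fne: "(norm (JM a - JM b))\<^sup>2 \<le> inner (JM a - JM b) (a - b)"
proof -
  have "(norm (JM a - JM b))\<^sup>2 = (norm (resolvent A (fst a) - resolvent A (fst b)))\<^sup>2
      + (norm (resolvent B (snd a) - resolvent B (snd b)))\<^sup>2"
    unfolding JM_def power2_norm_eq_inner inner_prod_def by simp
  also have "\<dots> \<le> inner (resolvent A (fst a) - resolvent A (fst b)) (fst a - fst b)
      + inner (resolvent B (snd a) - resolvent B (snd b)) (snd a - snd b)"
    using resolvent_fne[OF A_mm] resolvent_fne[OF B_mm] by (rule add_mono)
  also have "\<dots> = inner (JM a - JM b) (a - b)" unfolding JM_def inner_prod_def by simp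
  finally show ?thesis .
qed

lemma NN_ne: "norm (NN a - NN b) \<le> norm (a - b)"
proof -
  define dj where "dj = JM a - JM b"
  have "NN a - NN b = RV (2 *\<^sub>R dj - (a - b))" unfolding NN_def RV_diff dj_def
    by (simp add: algebra_simps)
  then have "norm (NN a - NN b) = norm (2 *\<^sub>R dj - (a - b))" by (simp add: RV_norm)
  moreover have "(norm (2 *\<^sub>R dj - (a - b)))\<^sup>2 = 4 * (norm dj)\<^sup>2 - 4 * inner dj (a - b) + (norm (a - b))\<^sup>2"
    unfolding power2_norm_eq_inner by (simp add: inner_diff_left inner_diff_right inner_commute)
  moreover have "(norm dj)\<^sup>2 \<le> inner dj (a - b)" unfolding dj_def by (rule JM_fne)
  ultimately have "(norm (NN a - NN b))\<^sup>2 \<le> (norm (a - b))\<^sup>2" by simp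
  then show ?thesis using power2_le_imp_le norm_ge_zero by blast
qed

end


context setting
begin

lemma fixpoint_exists:
  assumes zer_ne: "zer (op_add A (\<lambda>z. Ls ` B (L z))) \<noteq> {}"
  shows "\<exists>f. NN f = f"
proof -
  obtain x' where "x' \<in> zer (op_add A (\<lambda>z. Ls ` B (L z)))" using zer_ne by blast
  then obtain a' c' where ac: "0 = a' + c'" "a' \<in> A x'" "c' \<in> Ls ` B (L x')"
    unfolding zer_def op_add_def by blast
  then obtain b' where b': "b' \<in> B (L x')" "c' = Ls b'" by blast
  have a'eq: "a' = - Ls b'" using ac(1) b'(2) by (simp add: eq_neg_iff_add_eq_0)
  define f where "f = (x' + a', L x' + b')"
  have J: "JM f = (x', L x')"
  proof -
    have "resolvent A (x' + a') = x'" by (rule resolvent_eq[OF A_mm]) (simp add: ac(2))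
    moreover have "resolvent B (L x' + b') = L x'" by (rule resolvent_eq[OF B_mm]) (simp add: b'(1))
    ultimately show ?thesis unfolding JM_def f_def by simp
  qed
  have "PV (2 *\<^sub>R JM f - f) = (x', L x')"
  proof (rule PV_decomp)
    show "inV (x', L x')" unfolding inV_def by simp
    show "inW (Ls b', - b')" unfolding inW_def by (simp add: Ls_minus)
    show "2 *\<^sub>R JM f - f = (x', L x') + (Ls b', - b')"
      unfolding J by (simp add: f_def a'eq scaleR_2 algebra_simps)
  qed
  then have "NN f = f" unfolding NN_def RV_def J by (simp add: scaleR_2 algebra_simps)
  then show ?thesis by blast
qed

lemma main:
  fixes lam :: "nat \<Rightarrow> real"
    and a :: "nat \<Rightarrow> 'h" and b :: "nat \<Rightarrow> 'g"
    and x u p r :: "nat \<Rightarrow> 'h"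
    and y v q s t w :: "nat \<Rightarrow> 'g"
    and x0 :: 'h and v0 :: 'g
  assumes zer_ne: "zer (op_add A (\<lambda>z. Ls ` B (L z))) \<noteq> {}"
    and lam_range: "\<forall>n. 0 < lam n \<and> lam n < 2"
    and lam_div: "\<not> summable (\<lambda>n. lam n * (2 - lam n))"
    and err_sum: "summable (\<lambda>n. lam n * sqrt ((norm (a n))\<^sup>2 + (norm (b n))\<^sup>2))"
    and init: "x 0 = x0" "v 0 = v0" "y 0 = L x0" "u 0 = - Ls v0"
    and p_def: "\<forall>n. p n = resolvent A (x n + u n) + a n"
    and q_def: "\<forall>n. q n = resolvent B (y n + v n) + b n"
    and r_def: "\<forall>n. r n = x n + u n - p n"
    and s_def: "\<forall>n. s n = y n + v n - q n"
    and t_def: "\<forall>n. t n = inv_id_plus (L \<circ> Ls) (L (r n) - s n)"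
    and w_def: "\<forall>n. w n = inv_id_plus (L \<circ> Ls) (L (p n) - q n)"
    and x_step: "\<forall>n. x (Suc n) = x n + lam n *\<^sub>R (Ls (t n) - r n)"
    and y_step: "\<forall>n. y (Suc n) = y n - lam n *\<^sub>R (t n + s n)"
    and u_step: "\<forall>n. u (Suc n) = u n - lam n *\<^sub>R Ls (w n)"
    and v_step: "\<forall>n. v (Suc n) = v n + lam n *\<^sub>R w n"
  shows
    "(let Q = inv_id_plus (Ls \<circ> L);
          tt = (\<lambda>n. Q (r n + Ls (s n)));
          ww = (\<lambda>n. Q (p n + Ls (q n)));
          e = (\<lambda>n. Q (a n + Ls (b n)))
      in ((\<lambda>n. x n - ww n + e n) \<longlonglongrightarrow> 0)
       \<and> ((\<lambda>n. y n - L (ww n) + L (e n)) \<longlonglongrightarrow> 0)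
       \<and> ((\<lambda>n. u n - r n + tt n - a n + e n) \<longlonglongrightarrow> 0)
       \<and> ((\<lambda>n. v n - s n + L (tt n) - b n + L (e n)) \<longlonglongrightarrow> 0))
     \<and> (\<exists>xb vb.
          xb \<in> zer (op_add A (\<lambda>z. Ls ` B (L z)))
        \<and> vb \<in> zer (op_add (\<lambda>g. (\<lambda>z. - L z) ` set_inv A (- Ls g)) (set_inv B))
        \<and> - Ls vb \<in> A xb \<and> vb \<in> B (L xb)
        \<and> x \<rightharpoonup> xb \<and> v \<rightharpoonup> vb)"
proof -
  define zz where "zz n = (x n + u n, y n + v n)" for n
  define e where "e n = (a n, b n)" for n
  have hR: "t n + L (Ls (t n)) = L (r n) - s n" for n
    using R_eq[of "L (r n) - s n"] t_def unfolding R_def by simp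
  have hW: "w n + L (Ls (w n)) = L (p n) - q n" for n
    using R_eq[of "L (p n) - q n"] w_def unfolding R_def by simp
  have PVrs: "PV (r n, s n) = (r n - Ls (t n), s n + t n)" for n
  proof (rule PV_decomp)
    show "inV (r n - Ls (t n), s n + t n)" unfolding inV_def using hR[of n] by (simp add: L_diff algebra_simps)
    show "inW (Ls (t n), - t n)" unfolding inW_def by (simp add: Ls_minus)
  qed simp
  have PVpq: "PV (p n, q n) = (p n - Ls (w n), q n + w n)" for n
  proof (rule PV_decomp)
    show "inV (p n - Ls (w n), q n + w n)" unfolding inV_def using hW[of n] by (simp add: L_diff algebra_simps)
    show "inW (Ls (w n), - w n)" unfolding inW_def by (simp add: Ls_minus)
  qed simp
  have inv: "inV (x n, y n) \<and> inW (u n, v n)" for n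
  proof (induction n)
    case 0
    show ?case unfolding inV_def inW_def using init by simp
  next
    case (Suc n)
    have "(x (Suc n), y (Suc n)) = (x n, y n) - lam n *\<^sub>R (r n - Ls (t n), s n + t n)"
      using x_step y_step by (simp add: algebra_simps)
    moreover have "(u (Suc n), v (Suc n)) = (u n, v n) - lam n *\<^sub>R (Ls (w n), - w n)"
      using u_step v_step by (simp add: algebra_simps)
    moreover have "inV ((x n, y n) - lam n *\<^sub>R PV (r n, s n))"
      using inV_diff[OF Suc[THEN conjunct1] inV_scale[OF PV_inV]] .
    moreover have "inW ((u n, v n) - lam n *\<^sub>R ((p n, q n) - PV (p n, q n)))"
      using inW_diff[OF Suc[THEN conjunct2] inW_scale[OF PV_inW]] .
    moreover have "(p n, q n) - PV (p n, q n) = (Ls (w n), - w n)" unfolding PVpq by simp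
    ultimately show ?case unfolding PVrs by simp
  qed
  have xyPV: "PV (zz n) = (x n, y n)" for n
    by (rule PV_decomp[OF inv[THEN conjunct1] inv[THEN conjunct2]]) (simp add: zz_def)
  have uvW: "zz n - PV (zz n) = (u n, v n)" for n unfolding xyPV by (simp add: zz_def)
  define J where "J n = JM (zz n)" for n
  have pq: "(p n, q n) = J n + e n" for n using p_def q_def unfolding J_def JM_def zz_def e_def by simp
  have rs: "(r n, s n) = zz n - (p n, q n)" for n using r_def s_def unfolding zz_def by simp
  have PVpq2: "PV (p n, q n) = PV (J n) + PV (e n)" for n by (simp add: pq PV_add)
  have PVrs2: "PV (r n, s n) = PV (zz n) - PV (J n) - PV (e n)" for n by (simp add: rs PV_diff PVpq2)
  have nn: "NN (zz n) = 2 *\<^sub>R (2 *\<^sub>R PV (J n) - PV (zz n)) - (2 *\<^sub>R J n - zz n)" for n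
    unfolding NN_def RV_def J_def[symmetric] by (simp add: PV_diff PV_scale)
  have nz: "NN (zz n) - zz n = 2 *\<^sub>R (2 *\<^sub>R PV (J n) - PV (zz n) - J n)" for n
    unfolding nn by (simp add: algebra_simps scaleR_2)
  have stepz: "zz (Suc n) = zz n + (lam n / 2) *\<^sub>R (NN (zz n) - zz n) + lam n *\<^sub>R RV (e n)" for n
  proof -
    have z1: "zz (Suc n) = zz n - lam n *\<^sub>R (PV (r n, s n) + ((p n, q n) - PV (p n, q n)))"
      unfolding zz_def PVrs PVpq x_step[rule_format] y_step[rule_format] u_step[rule_format] v_step[rule_format]
      by (simp add: algebra_simps)
    have h: "(lam n / 2) *\<^sub>R (NN (zz n) - zz n) = lam n *\<^sub>R (2 *\<^sub>R PV (J n) - PV (zz n) - J n)"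
      unfolding nz by simp
    show ?thesis unfolding z1 h PVrs2 PVpq2 pq RV_def by (simp add: algebra_simps scaleR_2 PV_add)
  qed
  obtain f where fx: "NN f = f" using fixpoint_exists[OF zer_ne] by blast
  have mu: "0 < lam n / 2 \<and> lam n / 2 < 1" for n using lam_range by auto
  have dv: "\<not> summable (\<lambda>n. (lam n / 2) * (1 - lam n / 2))"
  proof
    assume "summable (\<lambda>n. (lam n / 2) * (1 - lam n / 2))"
    then have sm: "summable (\<lambda>n. 4 * ((lam n / 2) * (1 - lam n / 2)))" by (rule summable_mult)
    have eq: "(\<lambda>n. lam n * (2 - lam n)) = (\<lambda>n. 4 * ((lam n / 2) * (1 - lam n / 2)))"
      by (rule ext) (simp add: algebra_simps)
    show False using lam_div[unfolded eq] sm by blast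
  qed
  have es: "summable (\<lambda>n. norm (lam n *\<^sub>R RV (e n)))"
  proof -
    have "norm (lam n *\<^sub>R RV (e n)) = lam n * sqrt ((norm (a n))\<^sup>2 + (norm (b n))\<^sup>2)" for n
      using lam_range[rule_format, of n] by (simp add: RV_norm e_def norm_Pair)
    then show ?thesis using err_sum by simp
  qed
  from KM[OF NN_ne fx stepz mu dv es]
  have ar: "(\<lambda>n. NN (zz n) - zz n) \<longlonglongrightarrow> 0" and "\<exists>zb. NN zb = zb \<and> zz \<rightharpoonup> zb" by blast+
  then obtain zb where zbF: "NN zb = zb" and zbw: "zz \<rightharpoonup> zb" by blast
  define al where "al n = PV (J n - zz n)" for n
  define be where "be n = J n - PV (J n)" for n
  have albe: "al n - be n = (1/2) *\<^sub>R (NN (zz n) - zz n)" for n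
  proof -
    have hh: "(1/2) *\<^sub>R (2 *\<^sub>R X) = X" for X :: "'h \<times> 'g" by simp
    show ?thesis unfolding al_def be_def nz hh by (simp add: PV_diff algebra_simps scaleR_2)
  qed
  have albe0: "(\<lambda>n. al n - be n) \<longlonglongrightarrow> 0"
    unfolding albe using tendsto_scaleR[OF tendsto_const ar, of "1/2"] by simp
  have nle: "norm (al n) \<le> norm (al n - be n)" for n
  proof -
    have "(norm (al n + - be n))\<^sup>2 = (norm (al n))\<^sup>2 + (norm (- be n))\<^sup>2"
      unfolding al_def be_def by (rule orth_norm[OF PV_inV inW_neg[OF PV_inW]])
    then have "(norm (al n))\<^sup>2 \<le> (norm (al n - be n))\<^sup>2" by simp
    then show ?thesis using power2_le_imp_le norm_ge_zero by blast
  qed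
  have al0: "al \<longlonglongrightarrow> 0"
    by (rule Lim_null_comparison[OF always_eventually tendsto_norm_zero[OF albe0]]) (use nle in auto)
  have be0: "be \<longlonglongrightarrow> 0"
  proof -
    have "(\<lambda>n. al n - (al n - be n)) \<longlonglongrightarrow> 0 - 0" by (intro tendsto_intros al0 albe0)
    then show ?thesis by simp
  qed
  have fPV: "fst (PV z) = Q (fst z + Ls (snd z))" "snd (PV z) = L (Q (fst z + Ls (snd z)))" for z
    by (simp_all add: PV_def)
  have xPV: "x n = fst (PV (zz n))" "y n = snd (PV (zz n))" for n by (simp_all add: xyPV)
  have pJ: "p n = fst (J n) + a n" "q n = snd (J n) + b n" for n
    using pq[of n] unfolding e_def by (simp_all add: prod_eq_iff)
  have G1: "x n - Q (p n + Ls (q n)) + Q (a n + Ls (b n)) = - fst (al n)" for n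
  proof -
    have "Q (p n + Ls (q n)) = fst (PV (J n)) + fst (PV (e n))" using fPV(1)[of "(p n, q n)"] PVpq2[of n] by simp
    moreover have "Q (a n + Ls (b n)) = fst (PV (e n))" using fPV(1)[of "e n"] by (simp add: e_def)
    ultimately show ?thesis unfolding al_def PV_diff using xPV(1)[of n] by simp
  qed
  have G2: "y n - L (Q (p n + Ls (q n))) + L (Q (a n + Ls (b n))) = - snd (al n)" for n
  proof -
    have "L (Q (p n + Ls (q n))) = snd (PV (J n)) + snd (PV (e n))" using fPV(2)[of "(p n, q n)"] PVpq2[of n] by simp
    moreover have "L (Q (a n + Ls (b n))) = snd (PV (e n))" using fPV(2)[of "e n"] by (simp add: e_def)
    ultimately show ?thesis unfolding al_def PV_diff using xPV(2)[of n] by simp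
  qed
  have G3: "u n - r n + Q (r n + Ls (s n)) - a n + Q (a n + Ls (b n)) = fst (be n)" for n
  proof -
    have "Q (r n + Ls (s n)) = fst (PV (zz n)) - fst (PV (J n)) - fst (PV (e n))"
      using fPV(1)[of "(r n, s n)"] PVrs2[of n] by simp
    moreover have "Q (a n + Ls (b n)) = fst (PV (e n))" using fPV(1)[of "e n"] by (simp add: e_def)
    moreover have "r n = x n + u n - (fst (J n) + a n)" using r_def pJ(1)[of n] by simp
    ultimately show ?thesis unfolding be_def using xPV(1)[of n] by simp
  qed
  have G4: "v n - s n + L (Q (r n + Ls (s n))) - b n + L (Q (a n + Ls (b n))) = snd (be n)" for n
  proof -
    have "L (Q (r n + Ls (s n))) = snd (PV (zz n)) - snd (PV (J n)) - snd (PV (e n))"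
      using fPV(2)[of "(r n, s n)"] PVrs2[of n] by simp
    moreover have "L (Q (a n + Ls (b n))) = snd (PV (e n))" using fPV(2)[of "e n"] by (simp add: e_def)
    moreover have "s n = y n + v n - (snd (J n) + b n)" using s_def pJ(2)[of n] by simp
    ultimately show ?thesis unfolding be_def using xPV(2)[of n] by simp
  qed
  have part1: "((\<lambda>n. x n - Q (p n + Ls (q n)) + Q (a n + Ls (b n))) \<longlonglongrightarrow> 0)
       \<and> ((\<lambda>n. y n - L (Q (p n + Ls (q n))) + L (Q (a n + Ls (b n)))) \<longlonglongrightarrow> 0)
       \<and> ((\<lambda>n. u n - r n + Q (r n + Ls (s n)) - a n + Q (a n + Ls (b n))) \<longlonglongrightarrow> 0)
       \<and> ((\<lambda>n. v n - s n + L (Q (r n + Ls (s n))) - b n + L (Q (a n + Ls (b n)))) \<longlonglongrightarrow> 0)"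
  proof (intro conjI)
    show "(\<lambda>n. x n - Q (p n + Ls (q n)) + Q (a n + Ls (b n))) \<longlonglongrightarrow> 0"
      unfolding G1 using tendsto_minus[OF tendsto_fst[OF al0]] by simp
    show "(\<lambda>n. y n - L (Q (p n + Ls (q n))) + L (Q (a n + Ls (b n)))) \<longlonglongrightarrow> 0"
      unfolding G2 using tendsto_minus[OF tendsto_snd[OF al0]] by simp
    show "(\<lambda>n. u n - r n + Q (r n + Ls (s n)) - a n + Q (a n + Ls (b n))) \<longlonglongrightarrow> 0"
      unfolding G3 using tendsto_fst[OF be0] by simp
    show "(\<lambda>n. v n - s n + L (Q (r n + Ls (s n))) - b n + L (Q (a n + Ls (b n)))) \<longlonglongrightarrow> 0"
      unfolding G4 using tendsto_snd[OF be0] by simp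
  qed
  define xb where "xb = fst (PV zb)"
  define vb where "vb = snd (zb - PV zb)"
  define Jb where "Jb = JM zb"
  have "2 *\<^sub>R PV (2 *\<^sub>R Jb - zb) - (2 *\<^sub>R Jb - zb) = zb" using zbF unfolding NN_def RV_def Jb_def .
  then have "2 *\<^sub>R (PV (2 *\<^sub>R Jb - zb) - Jb) = 0" by (simp add: algebra_simps scaleR_2)
  then have PVJ: "PV (2 *\<^sub>R Jb - zb) = Jb" by simp
  have JbV: "inV Jb" using PV_inV[of "2 *\<^sub>R Jb - zb"] unfolding PVJ .
  have "PV (2 *\<^sub>R Jb - zb) = 2 *\<^sub>R Jb - PV zb" by (simp add: PV_diff PV_scale PV_idem[OF JbV])
  then have PVzb: "PV zb = Jb" using PVJ by (simp add: algebra_simps scaleR_2)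
  have resA: "resolvent A (fst zb) = xb" using PVzb unfolding xb_def Jb_def JM_def by simp
  have resB: "resolvent B (snd zb) = L xb"
    using PVzb JbV unfolding xb_def Jb_def JM_def inV_def by simp
  have wvb: "fst (zb - PV zb) = - Ls vb" using PV_inW[of zb] unfolding inW_def vb_def .
  have inA: "- Ls vb \<in> A xb"
    using resolvent_prop[OF A_mm, of "fst zb"] unfolding resA wvb[symmetric] PVzb Jb_def JM_def by simp
  have inB: "vb \<in> B (L xb)"
    using resolvent_prop[OF B_mm, of "snd zb"] unfolding resB vb_def PVzb Jb_def JM_def by simp
  have zer1: "xb \<in> zer (op_add A (\<lambda>z. Ls ` B (L z)))"
    unfolding zer_def op_add_def using inA inB by force
  have zer2: "vb \<in> zer (op_add (\<lambda>g. (\<lambda>z. - L z) ` set_inv A (- Ls g)) (set_inv B))"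
  proof -
    have "- L xb \<in> (\<lambda>z. - L z) ` set_inv A (- Ls vb)" using inA unfolding set_inv_def by blast
    moreover have "L xb \<in> set_inv B vb" using inB unfolding set_inv_def by blast
    ultimately show ?thesis unfolding zer_def op_add_def by force
  qed
  have xw: "x \<rightharpoonup> xb" unfolding weak_conv_def
  proof
    fix c
    have "inner (x n) c = inner (zz n) (PV (c, 0))" for n
      using PV_adj[of "zz n" "(c, 0)"] xPV(1)[of n] by (simp add: inner_Pair_0)
    moreover have "(\<lambda>n. inner (zz n) (PV (c, 0))) \<longlonglongrightarrow> inner zb (PV (c, 0))"
      using zbw unfolding weak_conv_def by blast
    moreover have "inner zb (PV (c, 0)) = inner xb c"
      using PV_adj[of zb "(c, 0)"] unfolding xb_def by (simp add: inner_Pair_0)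
    ultimately show "(\<lambda>n. inner (x n) c) \<longlonglongrightarrow> inner xb c" by simp
  qed
  have vw: "v \<rightharpoonup> vb" unfolding weak_conv_def
  proof
    fix c
    have "inner (v n) c = inner (zz n) (0, c) - inner (zz n) (PV (0, c))" for n
    proof -
      have "inner (v n) c = inner (zz n - PV (zz n)) (0, c)" using uvW[of n] by (simp add: inner_Pair_0)
      then show ?thesis using PV_adj[of "zz n" "(0, c)"] by (simp add: inner_diff_left)
    qed
    moreover have "(\<lambda>n. inner (zz n) (0, c) - inner (zz n) (PV (0, c))) \<longlonglongrightarrow> inner zb (0, c) - inner zb (PV (0, c))"
    proof -
      have t1: "(\<lambda>n. inner (zz n) (0, c)) \<longlonglongrightarrow> inner zb (0, c)" using zbw unfolding weak_conv_def by blast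
      have t2: "(\<lambda>n. inner (zz n) (PV (0, c))) \<longlonglongrightarrow> inner zb (PV (0, c))" using zbw unfolding weak_conv_def by blast
      show ?thesis by (rule tendsto_diff[OF t1 t2])
    qed
    moreover have "inner zb (0, c) - inner zb (PV (0, c)) = inner vb c"
      using PV_adj[of zb "(0, c)"] unfolding vb_def by (simp add: inner_diff_left inner_Pair_0)
    ultimately show "(\<lambda>n. inner (v n) c) \<longlonglongrightarrow> inner vb c" by simp
  qed
  show ?thesis unfolding Let_def Q_def[symmetric]
    using part1 zer1 zer2 inA inB xw vw by blast
qed

end


theorem theorem4p1:
  fixes A :: "'h::{real_inner,complete_space} \<Rightarrow> 'h set"
    and B :: "'g::{real_inner,complete_space} \<Rightarrow> 'g set"
    and L :: "'h \<Rightarrow> 'g" and Ls :: "'g \<Rightarrow> 'h"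
    and lam :: "nat \<Rightarrow> real"
    and a :: "nat \<Rightarrow> 'h" and b :: "nat \<Rightarrow> 'g"
    and x u p r :: "nat \<Rightarrow> 'h"
    and y v q s t w :: "nat \<Rightarrow> 'g"
    and x0 :: 'h and v0 :: 'g
  assumes A_mm: "maximal_monotone A"
    and B_mm: "maximal_monotone B"
    and L_lin: "bounded_linear L"
    and Ls_adj: "\<forall>z g. inner (L z) g = inner z (Ls g)"
    and zer_ne: "zer (op_add A (\<lambda>z. Ls ` B (L z))) \<noteq> {}"
    and lam_range: "\<forall>n. 0 < lam n \<and> lam n < 2"
    and lam_div: "\<not> summable (\<lambda>n. lam n * (2 - lam n))"
    and err_sum: "summable (\<lambda>n. lam n * sqrt ((norm (a n))\<^sup>2 + (norm (b n))\<^sup>2))"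
    and init: "x 0 = x0" "v 0 = v0" "y 0 = L x0" "u 0 = - Ls v0"
    and p_def: "\<forall>n. p n = resolvent A (x n + u n) + a n"
    and q_def: "\<forall>n. q n = resolvent B (y n + v n) + b n"
    and r_def: "\<forall>n. r n = x n + u n - p n"
    and s_def: "\<forall>n. s n = y n + v n - q n"
    and t_def: "\<forall>n. t n = inv_id_plus (L \<circ> Ls) (L (r n) - s n)"
    and w_def: "\<forall>n. w n = inv_id_plus (L \<circ> Ls) (L (p n) - q n)"
    and x_step: "\<forall>n. x (Suc n) = x n + lam n *\<^sub>R (Ls (t n) - r n)"
    and y_step: "\<forall>n. y (Suc n) = y n - lam n *\<^sub>R (t n + s n)"
    and u_step: "\<forall>n. u (Suc n) = u n - lam n *\<^sub>R Ls (w n)"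
    and v_step: "\<forall>n. v (Suc n) = v n + lam n *\<^sub>R w n"
  shows
    "(let Q = inv_id_plus (Ls \<circ> L);
          tt = (\<lambda>n. Q (r n + Ls (s n)));
          ww = (\<lambda>n. Q (p n + Ls (q n)));
          e = (\<lambda>n. Q (a n + Ls (b n)))
      in ((\<lambda>n. x n - ww n + e n) \<longlonglongrightarrow> 0)
       \<and> ((\<lambda>n. y n - L (ww n) + L (e n)) \<longlonglongrightarrow> 0)
       \<and> ((\<lambda>n. u n - r n + tt n - a n + e n) \<longlonglongrightarrow> 0)
       \<and> ((\<lambda>n. v n - s n + L (tt n) - b n + L (e n)) \<longlonglongrightarrow> 0))
     \<and> (\<exists>xb vb.
          xb \<in> zer (op_add A (\<lambda>z. Ls ` B (L z)))
        \<and> vb \<in> zer (op_add (\<lambda>g. (\<lambda>z. - L z) ` set_inv A (- Ls g)) (set_inv B))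
        \<and> - Ls vb \<in> A xb \<and> vb \<in> B (L xb)
        \<and> x \<rightharpoonup> xb \<and> v \<rightharpoonup> vb)"
proof -
  interpret setting A B L Ls by (rule setting.intro[OF A_mm B_mm L_lin Ls_adj])
  show ?thesis
    by (rule main[OF zer_ne lam_range lam_div err_sum init p_def q_def r_def s_def t_def w_def
          x_step y_step u_step v_step])
qed

end
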